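(* Let $\gamma$ be a curve of finite total curvature in $\mathbb{E}^d$, parametrized by arclength, and let $r=\gamma(s_0)$ be a point of $\gamma$ (not an endpoint, if $\gamma$ is an arc). Then $$\limsup_{p,q\to r}\delta(p,q)=\sec\frac{\alpha(r)}{2},$$ and this limit superior is realized by symmetric pairs $p=\gamma(s_0-h)$, $q=\gamma(s_0+h)$ with $h\to0^+$.
   Context: For distinct points $p,q$ on $\gamma$, $\delta(p,q)=\mathrm{Len}(p,q)/|p-q|$, where $\mathrm{Len}(p,q)$ is the (shorter) arclength distance along $\gamma$ between $p$ and $q$. A curve has finite total curvature if the supremum over inscribed polygons of the sum of turning angles at interior vertices is finite (turning angle at $v_n$: the angle in $[0,\pi]$ between $v_n-v_{n-1}$ and $v_{n+1}-v_n$). Such a curve is rectifiable and has well-defined one-sided unit tangent vectors $T_-(r)$ (incoming) and $T_+(r)$ (outgoing) at every point; $\alpha(r)\in[0,\pi]$ denotes the angle between $T_-(r)$ and $T_+(r)$ (the turning angle at $r$), which is $0$ when $r$ is not a corner. Here $\sec(\pi/2)=+\infty$. *)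

theory Defs
  imports "HOL-Analysis.Analysis"
begin

definition vangle :: "'a::euclidean_space \<Rightarrow> 'a \<Rightarrow> real" where
  "vangle u v = arccos ((u \<bullet> v) / (norm u * norm v))"

definition curve_length :: "(real \<Rightarrow> 'a::euclidean_space) \<Rightarrow> real \<Rightarrow> real \<Rightarrow> ereal" where
  "curve_length \<gamma> a b =
     (SUP nt \<in> {(n::nat, t::nat \<Rightarrow> real). t 0 = a \<and> t n = b \<and> (\<forall>i<n. t i \<le> t (Suc i))}.
        ereal (\<Sum>i<fst nt. dist (\<gamma> (snd nt i)) (\<gamma> (snd nt (Suc i)))))"

text \<open>Parameter domain: [0,L) for a closed curve (periodic of period L), [0,L] for an arc.\<close>
definition pdom :: "real \<Rightarrow> bool \<Rightarrow> real set" where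
  "pdom L cl = (if cl then {0..<L} else {0..L})"

definition simple_curve :: "(real \<Rightarrow> 'a::euclidean_space) \<Rightarrow> real \<Rightarrow> bool \<Rightarrow> bool" where
  "simple_curve \<gamma> L cl \<longleftrightarrow> 0 < L \<and>
     (if cl then continuous_on UNIV \<gamma> \<and> (\<forall>s. \<gamma> (s + L) = \<gamma> s) \<and> inj_on \<gamma> {0..<L}
      else continuous_on {0..L} \<gamma> \<and> inj_on \<gamma> {0..L})"

definition arclength_param :: "(real \<Rightarrow> 'a::euclidean_space) \<Rightarrow> real \<Rightarrow> bool" where
  "arclength_param \<gamma> L \<longleftrightarrow>
     (\<forall>s t. 0 \<le> s \<and> s \<le> t \<and> t \<le> L \<longrightarrow> curve_length \<gamma> s t = ereal (t - s))"

text \<open>Total curvature: supremum over inscribed polygons of the sum of turning angles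
  at interior vertices (open polygons for arcs, cl polygons for cl curves).\<close>
definition total_curvature :: "(real \<Rightarrow> 'a::euclidean_space) \<Rightarrow> real \<Rightarrow> bool \<Rightarrow> ereal" where
  "total_curvature \<gamma> L cl =
    (if cl then
       (SUP nt \<in> {(n::nat, t::nat \<Rightarrow> real). 3 \<le> n \<and> 0 \<le> t 0 \<and> t (n - 1) < L \<and>
                    (\<forall>i. Suc i < n \<longrightarrow> t i < t (Suc i))}.
          ereal (\<Sum>i<fst nt.
             vangle (\<gamma> (snd nt i) - \<gamma> (snd nt ((i + fst nt - 1) mod fst nt)))
                    (\<gamma> (snd nt ((i + 1) mod fst nt)) - \<gamma> (snd nt i))))
     else
       (SUP nt \<in> {(n::nat, t::nat \<Rightarrow> real). 0 \<le> t 0 \<and> t n \<le> L \<and>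
                    (\<forall>i<n. t i < t (Suc i))}.
          ereal (\<Sum>i\<in>{1..<fst nt}.
             vangle (\<gamma> (snd nt i) - \<gamma> (snd nt (i - 1)))
                    (\<gamma> (snd nt (Suc i)) - \<gamma> (snd nt i)))))"

definition finite_total_curvature :: "(real \<Rightarrow> 'a::euclidean_space) \<Rightarrow> real \<Rightarrow> bool \<Rightarrow> bool" where
  "finite_total_curvature \<gamma> L cl \<longleftrightarrow> total_curvature \<gamma> L cl < \<infinity>"

definition param_of :: "(real \<Rightarrow> 'a) \<Rightarrow> real \<Rightarrow> bool \<Rightarrow> 'a \<Rightarrow> real" where
  "param_of \<gamma> L cl p = (THE s. s \<in> pdom L cl \<and> \<gamma> s = p)"

definition Len :: "(real \<Rightarrow> 'a) \<Rightarrow> real \<Rightarrow> bool \<Rightarrow> 'a \<Rightarrow> 'a \<Rightarrow> real" where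
  "Len \<gamma> L cl p q =
    (let d = \<bar>param_of \<gamma> L cl p - param_of \<gamma> L cl q\<bar>
     in if cl then min d (L - d) else d)"

definition distortion :: "(real \<Rightarrow> 'a::euclidean_space) \<Rightarrow> real \<Rightarrow> bool \<Rightarrow> 'a \<Rightarrow> 'a \<Rightarrow> real" where
  "distortion \<gamma> L cl p q = Len \<gamma> L cl p q / dist p q"

definition T_plus :: "(real \<Rightarrow> 'a::euclidean_space) \<Rightarrow> real \<Rightarrow> 'a" where
  "T_plus \<gamma> s = Lim (at_right 0) (\<lambda>h. (\<gamma> (s + h) - \<gamma> s) /\<^sub>R h)"

definition T_minus :: "(real \<Rightarrow> 'a::euclidean_space) \<Rightarrow> real \<Rightarrow> 'a" where
  "T_minus \<gamma> s = Lim (at_right 0) (\<lambda>h. (\<gamma> s - \<gamma> (s - h)) /\<^sub>R h)"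

definition turn_angle :: "(real \<Rightarrow> 'a::euclidean_space) \<Rightarrow> real \<Rightarrow> real" where
  "turn_angle \<gamma> s = vangle (T_minus \<gamma> s) (T_plus \<gamma> s)"

definition esec :: "real \<Rightarrow> ereal" where
  "esec x = (if cos x = 0 then \<infinity> else ereal (1 / cos x))"

end

theory Submission
  imports Defs
begin



lemma vangle_cs:
  fixes u v :: "'a::euclidean_space"
  shows "-1 \<le> (u \<bullet> v) / (norm u * norm v) \<and> (u \<bullet> v) / (norm u * norm v) \<le> 1"
proof (cases "u = 0 \<or> v = 0")
  case True then show ?thesis by auto
next
  case False
  then have p: "norm u * norm v > 0" by auto
  have "\<bar>u \<bullet> v\<bar> \<le> norm u * norm v" by (rule Cauchy_Schwarz_ineq2)
  then show ?thesis using p by (auto simp: divide_simps abs_le_iff)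
qed

lemma vangle_nonneg: "0 \<le> vangle u v"
  unfolding vangle_def using vangle_cs[of u v] arccos_lbound by blast

lemma vangle_le_pi: "vangle u v \<le> pi"
  unfolding vangle_def using vangle_cs[of u v] arccos_ubound by blast

lemma vangle_neg: "vangle (-v) (-u) = vangle u v"
  unfolding vangle_def by (simp add: inner_commute mult.commute)

lemma cos_vangle: "cos (vangle u v) = (u \<bullet> v) / (norm u * norm v)"
  unfolding vangle_def using vangle_cs[of u v] by (simp add: cos_arccos)

lemma sgn_diff_le_vangle:
  fixes u v :: "'a::euclidean_space"
  assumes "u \<noteq> 0" "v \<noteq> 0"
  shows "norm (sgn u - sgn v) \<le> vangle u v"
proof -
  define x where "x = (u \<bullet> v) / (norm u * norm v)"
  define \<theta> where "\<theta> = vangle u v"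
  have cx: "cos \<theta> = x" unfolding \<theta>_def x_def by (rule cos_vangle)
  have th0: "0 \<le> \<theta>" unfolding \<theta>_def by (rule vangle_nonneg)
  have "sgn u \<bullet> sgn v = x" using assms unfolding x_def sgn_div_norm
    by (simp add: field_simps inner_commute)
  then have n2: "(norm (sgn u - sgn v))^2 = 2 - 2 * x"
  proof -
    have a: "sgn u \<bullet> sgn u = 1" "sgn v \<bullet> sgn v = 1" using assms
      by (simp_all add: dot_square_norm norm_sgn)
    have "(norm (sgn u - sgn v))^2 = (sgn u - sgn v) \<bullet> (sgn u - sgn v)"
      by (simp add: dot_square_norm)
    also have "\<dots> = sgn u \<bullet> sgn u + sgn v \<bullet> sgn v - 2 * (sgn u \<bullet> sgn v)"
      by (simp add: inner_diff_left inner_diff_right inner_commute)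
    finally show ?thesis using a \<open>sgn u \<bullet> sgn v = x\<close> by simp
  qed
  have "cos \<theta> = 1 - 2 * (sin (\<theta>/2))^2" using cos_double_sin[of "\<theta>/2"] by simp
  moreover have "(sin (\<theta>/2))^2 \<le> (\<theta>/2)^2"
    using abs_sin_x_le_abs_x[of "\<theta>/2"] by (metis abs_le_square_iff)
  ultimately have "2 - 2 * x \<le> \<theta>^2" using cx by (simp add: power_divide)
  then have "(norm (sgn u - sgn v))^2 \<le> \<theta>^2" using n2 by simp
  then show ?thesis unfolding \<theta>_def using th0 \<theta>_def by (meson power2_le_imp_le)
qed




definition turn :: "(real \<Rightarrow> 'a::euclidean_space) \<Rightarrow> nat \<Rightarrow> (nat \<Rightarrow> real) \<Rightarrow> real" where
  "turn g n t = (\<Sum>i\<in>{1..<n}. vangle (g (t i) - g (t (i - 1))) (g (t (Suc i)) - g (t i)))"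

lemma turn_nonneg: "0 \<le> turn g n t"
  unfolding turn_def by (intro sum_nonneg) (simp add: vangle_nonneg)

lemma turn_concat:
  assumes "q m < p 0"
  defines "R \<equiv> \<lambda>i. if i \<le> m then q i else p (i - Suc m)"
  shows "turn g m q + turn g n p \<le> turn g (m + Suc n) R"
proof -
  define f where "f = (\<lambda>i. vangle (g (R i) - g (R (i - 1))) (g (R (Suc i)) - g (R i)))"
  have A: "(\<Sum>i\<in>{1..<m}. f i) = turn g m q"
    unfolding turn_def f_def R_def by (intro sum.cong) auto
  have "(\<Sum>i\<in>{1 + Suc m..<n + Suc m}. f i) = (\<Sum>j=1..<n. f (j + Suc m))"
    by (rule sum.shift_bounds_nat_ivl)
  also have "\<dots> = turn g n p"
    unfolding turn_def f_def R_def
  proof (intro sum.cong refl)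
    fix j assume "j \<in> {1..<n}"
    then have j: "1 \<le> j" by auto
    have e1: "j + Suc m - 1 = j + m" by simp
    have e2: "j + m - Suc m = j - 1" using j by simp
    show "vangle (g (if j + Suc m \<le> m then q (j + Suc m) else p (j + Suc m - Suc m)) -
          g (if j + Suc m - 1 \<le> m then q (j + Suc m - 1) else p (j + Suc m - 1 - Suc m)))
         (g (if Suc (j + Suc m) \<le> m then q (Suc (j + Suc m)) else p (Suc (j + Suc m) - Suc m)) -
          g (if j + Suc m \<le> m then q (j + Suc m) else p (j + Suc m - Suc m))) =
         vangle (g (p j) - g (p (j - 1))) (g (p (Suc j)) - g (p j))"
      using j by (simp add: e1 e2)
  qed
  finally have B: "(\<Sum>i\<in>{1 + Suc m..<n + Suc m}. f i) = turn g n p" .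
  have disj: "{1..<m} \<inter> {1 + Suc m..<n + Suc m} = {}" by auto
  have sub: "{1..<m} \<union> {1 + Suc m..<n + Suc m} \<subseteq> {1..<m + Suc n}" by auto
  have "turn g m q + turn g n p = (\<Sum>i\<in>{1..<m} \<union> {1 + Suc m..<n + Suc m}. f i)"
    using A B disj by (simp add: sum.union_disjoint)
  also have "\<dots> \<le> (\<Sum>i\<in>{1..<m + Suc n}. f i)"
    by (rule sum_mono2[OF _ sub]) (auto simp: f_def vangle_nonneg)
  also have "\<dots> = turn g (m + Suc n) R" unfolding turn_def f_def ..
  finally show ?thesis .
qed

lemma incr_concat:
  assumes "\<forall>i<m. q i < q (Suc i)" "\<forall>i<n. p i < p (Suc i)" "q m < p 0"
  shows "\<forall>i<m + Suc n. (\<lambda>i. if i \<le> m then q i else p (i - Suc m)) i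
            < (\<lambda>i. if i \<le> m then q i else p (i - Suc m)) (Suc i)"
proof (intro allI impI)
  fix i assume i: "i < m + Suc n"
  consider "i < m" | "i = m" | "m < i" by linarith
  then show "(\<lambda>i. if i \<le> m then q i else p (i - Suc m)) i
            < (\<lambda>i. if i \<le> m then q i else p (i - Suc m)) (Suc i)"
  proof cases
    case 1 then show ?thesis using assms(1) by auto
  next
    case 2 then show ?thesis using assms(3) by auto
  next
    case 3
    then have "Suc i - Suc m = Suc (i - Suc m)" by simp
    moreover have "i - Suc m < n" using 3 i by simp
    ultimately show ?thesis using 3 assms(2) by auto
  qed
qed

lemma turn_reverse:
  "turn (\<lambda>h. g (c - h)) n t = turn g n (\<lambda>i. c - t (n - i))"
  unfolding turn_def
proof (rule sum.reindex_bij_witness[of _ "\<lambda>j. n - j" "\<lambda>i. n - i"])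
  fix i assume i: "i \<in> {1..<n}"
  show "n - (n - i) = i" using i by auto
  show "n - i \<in> {1..<n}" using i by auto
  have e1: "n - (n - i - 1) = Suc i" using i by auto
  have e2: "n - Suc (n - i) = i - 1" using i by auto
  have e3: "n - (n - i) = i" using i by auto
  show "vangle (g (c - t (n - (n - i))) - g (c - t (n - (n - i - 1))))
          (g (c - t (n - Suc (n - i))) - g (c - t (n - (n - i)))) =
        vangle (g (c - t i) - g (c - t (i - 1))) (g (c - t (Suc i)) - g (c - t i))"
    unfolding e1 e2 e3 using vangle_neg[of "g (c - t (Suc i)) - g (c - t i)" "g (c - t i) - g (c - t (i - 1))"]
    by (simp only: minus_diff_eq)
qed (auto)

lemma psum_reverse:
  "(\<Sum>i<n. dist (g (c - t i)) (g (c - t (Suc i)))) =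
   (\<Sum>i<n. dist (g ((\<lambda>i. c - t (n - i)) i)) (g ((\<lambda>i. c - t (n - i)) (Suc i))))"
proof -
  have "(\<Sum>i<n. dist (g (c - t i)) (g (c - t (Suc i)))) =
        (\<Sum>i<n. dist (g (c - t (n - Suc i))) (g (c - t (Suc (n - Suc i)))))"
    by (rule sum.nat_diff_reindex[symmetric])
  also have "\<dots> = (\<Sum>i<n. dist (g ((\<lambda>i. c - t (n - i)) i)) (g ((\<lambda>i. c - t (n - i)) (Suc i))))"
  proof (intro sum.cong refl)
    fix i assume "i \<in> {..<n}"
    then have "Suc (n - Suc i) = n - i" by auto
    then show "dist (g (c - t (n - Suc i))) (g (c - t (Suc (n - Suc i)))) =
      dist (g ((\<lambda>i. c - t (n - i)) i)) (g ((\<lambda>i. c - t (n - i)) (Suc i)))"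
      by (simp add: dist_commute)
  qed
  finally show ?thesis .
qed




locale side =
  fixes g :: "real \<Rightarrow> 'a::euclidean_space" and e0 K :: real
  assumes e0: "0 < e0"
  and inj: "inj_on g {0<..e0}"
  and lip: "\<And>a b. 0 \<le> a \<Longrightarrow> a \<le> b \<Longrightarrow> b \<le> e0 \<Longrightarrow> dist (g a) (g b) \<le> b - a"
  and part: "\<And>a b \<delta>. 0 \<le> a \<Longrightarrow> a \<le> b \<Longrightarrow> b \<le> e0 \<Longrightarrow> 0 < \<delta> \<Longrightarrow>
      \<exists>n t. t 0 = a \<and> t n = b \<and> (\<forall>i<n. t i \<le> t (Suc i)) \<and>
        b - a - \<delta> < (\<Sum>i<n. dist (g (t i)) (g (t (Suc i))))"
  and tb: "\<And>n t. (\<forall>i<n. t i < t (Suc i)) \<Longrightarrow> (\<forall>i\<le>n. 0 < t i \<and> t i \<le> e0) \<Longrightarrow> turn g n t \<le> K"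
begin

lemma gne: "0 < a \<Longrightarrow> a < b \<Longrightarrow> b \<le> e0 \<Longrightarrow> g b - g a \<noteq> 0"
  using inj unfolding inj_on_def by (metis eq_iff_diff_eq_0 greaterThanAtMost_iff less_eq_real_def not_less order.strict_trans)

lemma four:
  assumes "0 < a" "a < b" "b \<le> c" "c < d" "d \<le> e0"
  shows "\<exists>n t. (\<forall>i<n. t i < t (Suc i)) \<and> (\<forall>i\<le>n. 0 < t i \<and> t i \<le> d) \<and>
     norm (sgn (g b - g a) - sgn (g d - g c)) \<le> turn g n t"
proof (cases "b = c")
  case True
  define t where "t = (\<lambda>i::nat. if i = 0 then a else if i = 1 then b else d)"
  have "turn g 2 t = vangle (g b - g a) (g d - g b)"
    unfolding turn_def t_def by (simp add: numeral_2_eq_2)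
  moreover have "norm (sgn (g b - g a) - sgn (g d - g c)) \<le> vangle (g b - g a) (g d - g b)"
  proof -
    have "g b - g a \<noteq> 0" "g d - g b \<noteq> 0" using True assms gne by auto
    from sgn_diff_le_vangle[OF this] show ?thesis using True by simp
  qed
  moreover have "(\<forall>i<2. t i < t (Suc i))" using assms True
    by (auto simp: t_def numeral_2_eq_2 less_Suc_eq)
  moreover have "(\<forall>i\<le>2. 0 < t i \<and> t i \<le> d)" using assms True
    by (auto simp: t_def numeral_2_eq_2 le_Suc_eq)
  ultimately show ?thesis by (intro exI[of _ "2::nat"] exI[of _ t]) simp
next
  case False
  define t where "t = (\<lambda>i::nat. if i = 0 then a else if i = 1 then b else if i = 2 then c else d)"
  have "turn g 3 t = vangle (g b - g a) (g c - g b) + vangle (g c - g b) (g d - g c)"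
    unfolding turn_def t_def by (simp add: numeral_3_eq_3 numeral_2_eq_2)
  moreover have "norm (sgn (g b - g a) - sgn (g c - g b)) \<le> vangle (g b - g a) (g c - g b)"
    using False assms gne by (intro sgn_diff_le_vangle) auto
  moreover have "norm (sgn (g c - g b) - sgn (g d - g c)) \<le> vangle (g c - g b) (g d - g c)"
    using False assms gne by (intro sgn_diff_le_vangle) auto
  moreover have "norm (sgn (g b - g a) - sgn (g d - g c)) \<le>
     norm (sgn (g b - g a) - sgn (g c - g b)) + norm (sgn (g c - g b) - sgn (g d - g c))"
    using norm_triangle_ineq[of "sgn (g b - g a) - sgn (g c - g b)" "sgn (g c - g b) - sgn (g d - g c)"] by simp
  moreover have "(\<forall>i<3. t i < t (Suc i))" using assms False
    by (auto simp: t_def numeral_3_eq_3 less_Suc_eq)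
  moreover have "(\<forall>i\<le>3. 0 < t i \<and> t i \<le> d)" using assms False
    by (auto simp: t_def numeral_3_eq_3 le_Suc_eq)
  ultimately show ?thesis by (intro exI[of _ "3::nat"] exI[of _ t]) simp
qed

lemma lemK:
  assumes "0 < \<eta>"
  shows "\<exists>\<epsilon>>0. \<epsilon> \<le> e0 \<and> (\<forall>a b c d. 0 < a \<longrightarrow> a < b \<longrightarrow> b \<le> c \<longrightarrow> c < d \<longrightarrow> d \<le> \<epsilon> \<longrightarrow>
      norm (sgn (g b - g a) - sgn (g d - g c)) \<le> \<eta>)"
proof (rule ccontr)
  assume neg: "\<not> ?thesis"
  have big: "\<exists>n t. (\<forall>i<n. t i < t (Suc i)) \<and> (\<forall>i\<le>n. 0 < t i \<and> t i \<le> \<epsilon>) \<and> \<eta> < turn g n t"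
    if eps: "0 < \<epsilon>" "\<epsilon> \<le> e0" for \<epsilon>
  proof -
    from neg eps have "\<not> (\<forall>a b c d. 0 < a \<longrightarrow> a < b \<longrightarrow> b \<le> c \<longrightarrow> c < d \<longrightarrow> d \<le> \<epsilon> \<longrightarrow>
        norm (sgn (g b - g a) - sgn (g d - g c)) \<le> \<eta>)" by blast
    then obtain a b c d where abcd: "0 < a" "a < b" "b \<le> c" "c < d" "d \<le> \<epsilon>"
      "\<not> norm (sgn (g b - g a) - sgn (g d - g c)) \<le> \<eta>" by blast
    then obtain n t where nt: "(\<forall>i<n. t i < t (Suc i))" "(\<forall>i\<le>n. 0 < t i \<and> t i \<le> d)"
      "norm (sgn (g b - g a) - sgn (g d - g c)) \<le> turn g n t"
      using four[of a b c d] eps by auto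
    have "\<eta> < turn g n t" using abcd(6) nt(3) by simp
    moreover have "\<forall>i\<le>n. 0 < t i \<and> t i \<le> \<epsilon>" using nt(2) abcd(5) by force
    ultimately show ?thesis using nt(1) by blast
  qed
  have ind: "\<exists>n t. (\<forall>i<n. t i < t (Suc i)) \<and> (\<forall>i\<le>n. 0 < t i \<and> t i \<le> \<epsilon>) \<and> real N * \<eta> \<le> turn g n t"
    if "0 < \<epsilon>" "\<epsilon> \<le> e0" for N \<epsilon>
    using that
  proof (induction N arbitrary: \<epsilon>)
    case 0
    show ?case by (rule exI[of _ 0], rule exI[of _ "\<lambda>_. \<epsilon>"]) (use 0 in \<open>auto simp: turn_def\<close>)
  next
    case (Suc N)
    obtain n p where p: "(\<forall>i<n. p i < p (Suc i))" "(\<forall>i\<le>n. 0 < p i \<and> p i \<le> \<epsilon>)" "\<eta> < turn g n p"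
      using big Suc.prems by blast
    have p0: "0 < p 0" "p 0 \<le> \<epsilon>" using p(2) by auto
    obtain m q where q: "(\<forall>i<m. q i < q (Suc i))" "(\<forall>i\<le>m. 0 < q i \<and> q i \<le> p 0 / 2)"
      "real N * \<eta> \<le> turn g m q"
      using Suc.IH[of "p 0 / 2"] p0 Suc.prems by auto
    have qm: "q m < p 0" using q(2) p0 by force
    define R where "R = (\<lambda>i. if i \<le> m then q i else p (i - Suc m))"
    have "turn g m q + turn g n p \<le> turn g (m + Suc n) R"
      unfolding R_def by (rule turn_concat[where q=q and m=m and p=p, OF qm])
    moreover have "\<forall>i<m + Suc n. R i < R (Suc i)"
      unfolding R_def by (rule incr_concat[where q=q and m=m and p=p, OF q(1) p(1) qm])
    moreover have "\<forall>i\<le>m + Suc n. 0 < R i \<and> R i \<le> \<epsilon>"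
    proof (intro allI impI)
      fix i assume i: "i \<le> m + Suc n"
      show "0 < R i \<and> R i \<le> \<epsilon>"
      proof (cases "i \<le> m")
        case True then show ?thesis using q(2) p0 unfolding R_def by force
      next
        case False then show ?thesis using p(2) i unfolding R_def by auto
      qed
    qed
    ultimately show ?case using p(3) q(3)
      by (intro exI[of _ "m + Suc n"] exI[of _ R]) (auto simp: algebra_simps)
  qed
  obtain N where N: "K < real N * \<eta>" using ex_less_of_nat_mult[OF assms] by blast
  obtain n t where nt: "(\<forall>i<n. t i < t (Suc i))" "(\<forall>i\<le>n. 0 < t i \<and> t i \<le> e0)" "real N * \<eta> \<le> turn g n t"
    using ind[of e0 N] e0 by auto
  have "turn g n t \<le> K" by (rule tb[OF nt(1) nt(2)])
  then show False using N nt(3) by linarith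
qed

end



lemma mono_between:
  assumes "\<forall>i<n. t i \<le> t (Suc i)" "i \<le> j" "j \<le> n"
  shows "t i \<le> (t j :: real)"
  using assms(2,3)
proof (induction j)
  case 0 then show ?case by simp
next
  case (Suc j)
  show ?case
  proof (cases "i = Suc j")
    case True then show ?thesis by simp
  next
    case False
    then have "t i \<le> t j" using Suc by auto
    also have "t j \<le> t (Suc j)" using assms(1) Suc.prems by auto
    finally show ?thesis .
  qed
qed

lemma inner_unit:
  fixes x y :: "'a::real_inner"
  assumes "norm x = 1" "norm y = 1"
  shows "x \<bullet> y = 1 - (norm (x - y))^2 / 2"
proof -
  have "(norm (x - y))^2 = x \<bullet> x + y \<bullet> y - 2 * (x \<bullet> y)"
    by (simp add: power2_norm_eq_inner inner_diff_left inner_diff_right inner_commute)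
  moreover have "x \<bullet> x = 1" "y \<bullet> y = 1" using assms by (simp_all add: dot_square_norm)
  ultimately show ?thesis by (simp add: field_simps)
qed

lemma sgn_perturb:
  fixes v w :: "'a::real_normed_vector"
  assumes "v \<noteq> 0"
  shows "norm (sgn v - sgn w) \<le> 2 * norm (v - w) / norm v"
proof (cases "w = 0")
  case True
  then show ?thesis using assms by (simp add: norm_sgn)
next
  case False
  have nv: "norm v > 0" using assms by simp
  have nw: "norm w > 0" using False by simp
  have "sgn v - sgn w = (v - w) /\<^sub>R norm v + (inverse (norm v) - inverse (norm w)) *\<^sub>R w"
    by (simp add: sgn_div_norm algebra_simps divide_inverse_commute scaleR_diff_left)
  then have "norm (sgn v - sgn w) \<le> norm (v - w) / norm v + \<bar>inverse (norm v) - inverse (norm w)\<bar> * norm w"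
    using norm_triangle_ineq[of "(v - w) /\<^sub>R norm v" "(inverse (norm v) - inverse (norm w)) *\<^sub>R w"]
    by (simp add: divide_inverse_commute)
  also have "\<bar>inverse (norm v) - inverse (norm w)\<bar> * norm w = \<bar>norm w - norm v\<bar> / norm v"
    using nv nw by (simp add: field_simps abs_div abs_mult)
  also have "\<bar>norm w - norm v\<bar> \<le> norm (v - w)"
    by (metis norm_minus_commute norm_triangle_ineq3)
  then have "\<bar>norm w - norm v\<bar> / norm v \<le> norm (v - w) / norm v"
    using nv by (simp add: divide_right_mono)
  finally show ?thesis by simp
qed

context side begin

lemma lower_pos:
  assumes "0 < \<eta>" "\<eta> \<le> 1"
  shows "\<exists>\<epsilon>>0. \<epsilon> \<le> e0 \<and> (\<forall>a b. 0 \<le> a \<longrightarrow> a \<le> b \<longrightarrow> b \<le> \<epsilon> \<longrightarrow>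
            (1 - \<eta>^2/2) * (b - a) \<le> dist (g a) (g b))"
proof -
  define c where "c = 1 - \<eta>^2/2"
  have c: "1/2 \<le> c" "c \<le> 1" using assms unfolding c_def
    by (auto simp: power_le_one)
  obtain \<epsilon>1 where e1: "0 < \<epsilon>1" "\<epsilon>1 \<le> e0" and K1: "\<And>a b c d. 0 < a \<Longrightarrow> a < b \<Longrightarrow> b \<le> c \<Longrightarrow> c < d \<Longrightarrow> d \<le> \<epsilon>1 \<Longrightarrow>
      norm (sgn (g b - g a) - sgn (g d - g c)) \<le> \<eta>"
    using lemK[OF assms(1)] by blast
  define \<epsilon> where "\<epsilon> = \<epsilon>1 / 2"
  have eps: "0 < \<epsilon>" "\<epsilon> < \<epsilon>1" "\<epsilon> \<le> e0" using e1 unfolding \<epsilon>_def by auto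
  have step1: "c * (b - a) \<le> dist (g a) (g b)" if ab: "0 < a" "a \<le> b" "b \<le> \<epsilon>" for a b
  proof (rule field_le_epsilon)
    fix \<delta> :: real assume \<delta>: "0 < \<delta>"
    define u where "u = sgn (g \<epsilon>1 - g b)"
    have bne: "g \<epsilon>1 - g b \<noteq> 0" using gne[of b \<epsilon>1] ab eps e1 by auto
    have nu: "norm u = 1" unfolding u_def using bne by (simp add: norm_sgn)
    obtain n t where t: "t 0 = a" "t n = b" "\<forall>i<n. t i \<le> t (Suc i)"
      "b - a - \<delta> < (\<Sum>i<n. dist (g (t i)) (g (t (Suc i))))"
      using part[of a b \<delta>] ab eps \<delta> by auto
    have tb: "a \<le> t i \<and> t i \<le> b" if "i \<le> n" for i
      using mono_between[OF t(3), of 0 i] mono_between[OF t(3), of i n] that t(1,2) by auto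
    have trm: "c * dist (g (t i)) (g (t (Suc i))) \<le> (g (t (Suc i)) - g (t i)) \<bullet> u" if i: "i < n" for i
    proof (cases "t i = t (Suc i)")
      case True then show ?thesis by simp
    next
      case False
      then have lt: "t i < t (Suc i)" using t(3) i by (simp add: order.not_eq_order_implies_strict)
      have ti: "0 < t i" "t (Suc i) \<le> b" using tb[of i] tb[of "Suc i"] i ab by auto
      define v where "v = g (t (Suc i)) - g (t i)"
      have vne: "v \<noteq> 0" unfolding v_def using gne[of "t i" "t (Suc i)"] ti lt ab eps by auto
      have "norm (sgn v - u) \<le> \<eta>" unfolding v_def u_def
        using K1[of "t i" "t (Suc i)" b \<epsilon>1] ti lt ab eps by auto
      then have "(norm (sgn v - u))^2 \<le> \<eta>^2" by (simp add: power_mono)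
      moreover have "sgn v \<bullet> u = 1 - (norm (sgn v - u))^2 / 2"
        by (rule inner_unit) (use vne nu in \<open>auto simp: norm_sgn\<close>)
      ultimately have "c \<le> sgn v \<bullet> u" unfolding c_def by simp
      then have "norm v * c \<le> norm v * (sgn v \<bullet> u)" by (simp add: mult_left_mono)
      also have "norm v * (sgn v \<bullet> u) = v \<bullet> u" using vne
        by (simp add: sgn_div_norm inner_scaleR_left)
      finally show ?thesis unfolding v_def by (simp add: dist_norm norm_minus_commute mult.commute)
    qed
    have "c * (\<Sum>i<n. dist (g (t i)) (g (t (Suc i)))) \<le> (\<Sum>i<n. (g (t (Suc i)) - g (t i)) \<bullet> u)"
      unfolding sum_distrib_left by (rule sum_mono) (use trm in auto)
    also have "\<dots> = (g b - g a) \<bullet> u"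
      using sum_lessThan_telescope[of "\<lambda>i. g (t i)" n] by (simp add: inner_sum_left[symmetric] t(1,2))
    also have "\<dots> \<le> norm (g b - g a) * norm u" by (rule norm_cauchy_schwarz)
    finally have "c * (\<Sum>i<n. dist (g (t i)) (g (t (Suc i)))) \<le> dist (g a) (g b)"
      using nu by (simp add: dist_norm norm_minus_commute)
    moreover have "c * (b - a - \<delta>) \<le> c * (\<Sum>i<n. dist (g (t i)) (g (t (Suc i))))"
      using t(4) c by (intro mult_left_mono) auto
    ultimately have "c * (b - a) - c * \<delta> \<le> dist (g a) (g b)" by (simp add: algebra_simps)
    moreover have "c * \<delta> \<le> \<delta>" using c \<delta> by simp
    ultimately show "c * (b - a) \<le> dist (g a) (g b) + \<delta>" by linarith
  qed
  have step2: "c * (b - a) \<le> dist (g a) (g b)" if ab: "0 \<le> a" "a \<le> b" "b \<le> \<epsilon>" for a b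
  proof (cases "0 < a")
    case True then show ?thesis using step1 ab by auto
  next
    case False
    then have a0: "a = 0" using ab by auto
    show ?thesis
    proof (cases "b = 0")
      case True then show ?thesis using a0 by simp
    next
      case False
      then have b0: "0 < b" using ab a0 by auto
      show ?thesis
      proof (rule field_le_epsilon)
        fix e :: real assume e: "0 < e"
        define a' where "a' = min b (e/2)"
        have a': "0 < a'" "a' \<le> b" "a' \<le> e/2" unfolding a'_def using b0 e by auto
        have "c * (b - a') \<le> dist (g a') (g b)" using step1[of a' b] a' ab by auto
        then have "c * b - c * a' \<le> dist (g a') (g b)" by (simp add: algebra_simps)
        moreover have "dist (g 0) (g a') \<le> a' - 0" using lip[of 0 a'] a' ab eps by auto
        moreover have "dist (g a') (g b) \<le> dist (g 0) (g a') + dist (g 0) (g b)"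
          by (metis dist_commute dist_triangle)
        moreover have "c * a' \<le> a'" using c a' by simp
        ultimately have "c * b \<le> dist (g 0) (g b) + e" using a' by linarith
        then show "c * (b - a) \<le> dist (g a) (g b) + e" using a0 by simp
      qed
    qed
  qed
  show ?thesis using eps step2 unfolding c_def by blast
qed

lemma lower:
  assumes "0 < \<eta>"
  shows "\<exists>\<epsilon>>0. \<epsilon> \<le> e0 \<and> (\<forall>a b. 0 \<le> a \<longrightarrow> a \<le> b \<longrightarrow> b \<le> \<epsilon> \<longrightarrow>
            (1 - \<eta>) * (b - a) \<le> dist (g a) (g b))"
proof -
  define \<eta>' where "\<eta>' = min 1 \<eta>"
  have h: "0 < \<eta>'" "\<eta>' \<le> 1" using assms unfolding \<eta>'_def by auto
  have le: "1 - \<eta> \<le> 1 - \<eta>'^2/2"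
  proof -
    have "\<eta>'^2 \<le> \<eta>'" using h by (simp add: power2_eq_square mult_le_one)
    then show ?thesis using h unfolding \<eta>'_def by auto
  qed
  obtain \<epsilon> where e: "0 < \<epsilon>" "\<epsilon> \<le> e0" and E: "\<forall>a b. 0 \<le> a \<longrightarrow> a \<le> b \<longrightarrow> b \<le> \<epsilon> \<longrightarrow>
            (1 - \<eta>'^2/2) * (b - a) \<le> dist (g a) (g b)"
    using lower_pos[OF h] by blast
  have "(1 - \<eta>) * (b - a) \<le> dist (g a) (g b)" if "0 \<le> a" "a \<le> b" "b \<le> \<epsilon>" for a b
  proof -
    have "(1 - \<eta>) * (b - a) \<le> (1 - \<eta>'^2/2) * (b - a)" using le that by (intro mult_right_mono) auto
    then show ?thesis using E that by fastforce
  qed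
  then show ?thesis using e by blast
qed

end




context side begin

lemma tangent:
  "\<exists>T. norm T = 1 \<and> ((\<lambda>h. (g h - g 0) /\<^sub>R h) \<longlongrightarrow> T) (at_right 0)"
proof -
  obtain \<epsilon>h where eh: "0 < \<epsilon>h" "\<epsilon>h \<le> e0" and EH: "\<And>a b. 0 \<le> a \<Longrightarrow> a \<le> b \<Longrightarrow> b \<le> \<epsilon>h \<Longrightarrow>
            (1 - 1/2) * (b - a) \<le> dist (g a) (g b)"
    using lower[of "1/2"] by auto
  have nz: "g x - g 0 \<noteq> 0" "x / 2 \<le> norm (g x - g 0)" if "0 < x" "x \<le> \<epsilon>h" for x
    using EH[of 0 x] that by (auto simp: dist_norm norm_minus_commute)
  define w where "w x = sgn (g x - g 0)" for x
  have W: "\<exists>\<epsilon>>0. \<forall>x y. 0 < x \<longrightarrow> x \<le> \<epsilon> \<longrightarrow> 0 < y \<longrightarrow> y \<le> \<epsilon> \<longrightarrow> norm (w x - w y) \<le> \<eta>"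
    if \<eta>: "0 < \<eta>" for \<eta>
  proof -
    obtain \<epsilon>1 where e1: "0 < \<epsilon>1" "\<epsilon>1 \<le> e0" and K1: "\<And>a b c d. 0 < a \<Longrightarrow> a < b \<Longrightarrow> b \<le> c \<Longrightarrow> c < d \<Longrightarrow> d \<le> \<epsilon>1 \<Longrightarrow>
      norm (sgn (g b - g a) - sgn (g d - g c)) \<le> \<eta>/2"
      using lemK[of "\<eta>/2"] \<eta> by auto
    define \<epsilon> where "\<epsilon> = min \<epsilon>1 \<epsilon>h / 2"
    have eps: "0 < \<epsilon>" "2 * \<epsilon> \<le> \<epsilon>1" "\<epsilon> \<le> \<epsilon>h" using e1 eh unfolding \<epsilon>_def by auto
    define z where "z = sgn (g (2 * \<epsilon>) - g \<epsilon>)"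
    have close: "norm (w x - z) \<le> \<eta>/2" if x: "0 < x" "x \<le> \<epsilon>" for x
    proof (rule field_le_epsilon)
      fix e :: real assume e: "0 < e"
      define a where "a = min (x/2) (e * x / 8)"
      have a: "0 < a" "a < x" "a \<le> e * x / 8" unfolding a_def using x e by auto
      have vne: "g x - g 0 \<noteq> 0" and nv: "x / 2 \<le> norm (g x - g 0)" using nz[of x] x eps by auto
      have "norm (w x - sgn (g x - g a)) \<le> 2 * norm ((g x - g 0) - (g x - g a)) / norm (g x - g 0)"
        unfolding w_def by (rule sgn_perturb[OF vne])
      also have "norm ((g x - g 0) - (g x - g a)) = dist (g 0) (g a)"
        by (simp add: dist_norm norm_minus_commute)
      also have "dist (g 0) (g a) \<le> a" using lip[of 0 a] a x eps eh by auto
      then have "2 * dist (g 0) (g a) / norm (g x - g 0) \<le> 2 * a / (x / 2)"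
        using nv x a by (intro frac_le) auto
      also have "2 * a / (x / 2) \<le> e / 2" using a x by (simp add: field_simps)
      finally have A: "norm (w x - sgn (g x - g a)) \<le> e / 2" .
      have B: "norm (sgn (g x - g a) - z) \<le> \<eta>/2"
        unfolding z_def using K1[of a x \<epsilon> "2 * \<epsilon>"] a x eps by auto
      have "norm (w x - z) \<le> norm (w x - sgn (g x - g a)) + norm (sgn (g x - g a) - z)"
        using norm_triangle_ineq[of "w x - sgn (g x - g a)" "sgn (g x - g a) - z"] by simp
      then show "norm (w x - z) \<le> \<eta>/2 + e" using A B e by linarith
    qed
    show ?thesis
    proof (intro exI[of _ \<epsilon>] conjI allI impI)
      fix x y assume "0 < x" "x \<le> \<epsilon>" "0 < y" "y \<le> \<epsilon>"
      then have "norm (w x - z) \<le> \<eta>/2" "norm (w y - z) \<le> \<eta>/2" using close by auto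
      moreover have "norm (w x - w y) \<le> norm (w x - z) + norm (w y - z)"
        using norm_triangle_ineq[of "w x - z" "z - w y"] by (simp add: norm_minus_commute)
      ultimately show "norm (w x - w y) \<le> \<eta>" by linarith
    qed (use eps in auto)
  qed
  define s where "s n = w (\<epsilon>h / real (Suc n))" for n
  have sarg: "0 < \<epsilon>h / real (Suc n)" "\<epsilon>h / real (Suc n) \<le> \<epsilon>h" for n
    using eh by (auto simp: field_simps)
  have small: "\<exists>N. \<forall>n\<ge>N. \<epsilon>h / real (Suc n) \<le> \<epsilon>" if "0 < \<epsilon>" for \<epsilon>
  proof -
    obtain N where N: "\<epsilon>h / \<epsilon> < real N" using reals_Archimedean2 by blast
    have "\<epsilon>h / real (Suc n) \<le> \<epsilon>" if "N \<le> n" for n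
    proof -
      have "\<epsilon>h / \<epsilon> < real (Suc n)" using N that by linarith
      then show ?thesis using \<open>0 < \<epsilon>\<close> by (simp add: field_simps)
    qed
    then show ?thesis by blast
  qed
  have "Cauchy s"
  proof (rule metric_CauchyI)
    fix e :: real assume e: "0 < e"
    obtain \<epsilon> where eps: "0 < \<epsilon>" and E: "\<forall>x y. 0 < x \<longrightarrow> x \<le> \<epsilon> \<longrightarrow> 0 < y \<longrightarrow> y \<le> \<epsilon> \<longrightarrow> norm (w x - w y) \<le> e/2"
      using W[of "e/2"] e by auto
    obtain N where N: "\<forall>n\<ge>N. \<epsilon>h / real (Suc n) \<le> \<epsilon>" using small eps by blast
    show "\<exists>M. \<forall>m\<ge>M. \<forall>n\<ge>M. dist (s m) (s n) < e"
    proof (intro exI[of _ N] allI impI)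
      fix m n assume "N \<le> m" "N \<le> n"
      then have "norm (s m - s n) \<le> e/2" unfolding s_def using E N sarg by blast
      then show "dist (s m) (s n) < e" using e by (simp add: dist_norm)
    qed
  qed
  then obtain T where sT: "s \<longlonglongrightarrow> T" using Cauchy_convergent_iff convergent_def by blast
  have ns: "norm (s n) = 1" for n
    unfolding s_def w_def using nz(1)[OF sarg] by (simp add: norm_sgn)
  have nT: "norm T = 1"
  proof -
    have "(\<lambda>n. norm (s n)) \<longlonglongrightarrow> norm T" by (rule tendsto_norm[OF sT])
    then have "(\<lambda>n. 1::real) \<longlonglongrightarrow> norm T" using ns by simp
    then show ?thesis using LIMSEQ_const_iff by metis
  qed
  have wT: "(w \<longlongrightarrow> T) (at_right 0)"
  proof (rule tendstoI)
    fix e :: real assume e: "0 < e"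
    obtain \<epsilon> where eps: "0 < \<epsilon>" and E: "\<forall>x y. 0 < x \<longrightarrow> x \<le> \<epsilon> \<longrightarrow> 0 < y \<longrightarrow> y \<le> \<epsilon> \<longrightarrow> norm (w x - w y) \<le> e/2"
      using W[of "e/2"] e by auto
    obtain N where N: "\<forall>n\<ge>N. \<epsilon>h / real (Suc n) \<le> \<epsilon>" using small eps by blast
    obtain N2 where N2: "\<forall>n\<ge>N2. dist (s n) T < e/2" using sT e
      by (metis half_gt_zero lim_sequentially)
    define n where "n = max N N2"
    have n1: "\<epsilon>h / real (Suc n) \<le> \<epsilon>" using N unfolding n_def by auto
    have n2: "dist (s n) T < e/2" using N2 unfolding n_def by auto
    show "\<forall>\<^sub>F x in at_right 0. dist (w x) T < e"
      unfolding eventually_at_right_field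
    proof (intro exI[of _ \<epsilon>] conjI allI impI)
      fix x assume x: "0 < x" "x < \<epsilon>"
      have "norm (w x - s n) \<le> e/2" unfolding s_def using E x n1 sarg by auto
      then show "dist (w x) T < e" using n2 dist_triangle[of "w x" T "s n"]
        by (simp add: dist_norm)
    qed (use eps in auto)
  qed
  have rho: "((\<lambda>h. norm (g h - g 0) / h) \<longlongrightarrow> 1) (at_right 0)"
  proof (rule tendstoI)
    fix e :: real assume e: "0 < e"
    obtain \<epsilon> where eps: "0 < \<epsilon>" "\<epsilon> \<le> e0" and E: "\<forall>a b. 0 \<le> a \<longrightarrow> a \<le> b \<longrightarrow> b \<le> \<epsilon> \<longrightarrow>
            (1 - e/2) * (b - a) \<le> dist (g a) (g b)"
      using lower[of "e/2"] e by auto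
    show "\<forall>\<^sub>F x in at_right 0. dist (norm (g x - g 0) / x) 1 < e"
      unfolding eventually_at_right_field
    proof (intro exI[of _ \<epsilon>] conjI allI impI)
      fix x assume x: "0 < x" "x < \<epsilon>"
      have lo: "(1 - e/2) * x \<le> norm (g x - g 0)" using E[rule_format, of 0 x] x
        by (simp add: dist_norm norm_minus_commute)
      have up: "norm (g x - g 0) \<le> x" using lip[of 0 x] x eps by (simp add: dist_norm norm_minus_commute)
      have "1 - e/2 \<le> norm (g x - g 0) / x" using lo x by (simp add: field_simps)
      moreover have "norm (g x - g 0) / x \<le> 1" using up x by simp
      ultimately show "dist (norm (g x - g 0) / x) 1 < e" using e by (simp add: dist_real_def abs_if)
    qed (use eps in auto)
  qed
  have "((\<lambda>h. (norm (g h - g 0) / h) *\<^sub>R w h) \<longlongrightarrow> 1 *\<^sub>R T) (at_right 0)"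
    by (intro tendsto_scaleR rho wT)
  then have lim: "((\<lambda>h. (norm (g h - g 0) / h) *\<^sub>R w h) \<longlongrightarrow> T) (at_right 0)" by simp
  have ev: "\<forall>\<^sub>F h in at_right 0. (norm (g h - g 0) / h) *\<^sub>R w h = (g h - g 0) /\<^sub>R h"
    unfolding eventually_at_right_field
  proof (intro exI[of _ 1] conjI allI impI)
    fix h :: real assume "0 < h" "h < 1"
    show "(norm (g h - g 0) / h) *\<^sub>R w h = (g h - g 0) /\<^sub>R h"
      unfolding w_def by (cases "g h - g 0 = 0") (simp_all add: sgn_div_norm divide_inverse_commute)
  qed simp
  have "((\<lambda>h. (g h - g 0) /\<^sub>R h) \<longlongrightarrow> T) (at_right 0)"
    by (rule Lim_transform_eventually[OF lim ev])
  then show ?thesis using nT by blast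
qed

end



lemma cl_lip:
  fixes \<gamma> :: "real \<Rightarrow> 'a::euclidean_space"
  assumes "curve_length \<gamma> x y = ereal (y - x)" "x \<le> y"
  shows "dist (\<gamma> x) (\<gamma> y) \<le> y - x"
proof -
  define A where "A = {(n::nat, t::nat \<Rightarrow> real). t 0 = x \<and> t n = y \<and> (\<forall>i<n. t i \<le> t (Suc i))}"
  have mem: "(1::nat, \<lambda>i::nat. if i = 0 then x else y) \<in> A" unfolding A_def using assms(2) by auto
  have "ereal (\<Sum>i<fst (1::nat, \<lambda>i::nat. if i = 0 then x else y).
        dist (\<gamma> (snd (1::nat, \<lambda>i::nat. if i = 0 then x else y) i))
             (\<gamma> (snd (1::nat, \<lambda>i::nat. if i = 0 then x else y) (Suc i)))) \<le> curve_length \<gamma> x y"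
    unfolding curve_length_def A_def[symmetric] by (rule SUP_upper[OF mem])
  then show ?thesis using assms(1) by simp
qed

lemma cl_part:
  fixes \<gamma> :: "real \<Rightarrow> 'a::euclidean_space"
  assumes "curve_length \<gamma> x y = ereal (y - x)" "0 < \<delta>"
  shows "\<exists>n t. t 0 = x \<and> t n = y \<and> (\<forall>i<n. t i \<le> t (Suc i)) \<and>
        y - x - \<delta> < (\<Sum>i<n. dist (\<gamma> (t i)) (\<gamma> (t (Suc i))))"
proof -
  have "ereal (y - x - \<delta>) < curve_length \<gamma> x y" using assms by simp
  then obtain nt where nt: "nt \<in> {(n::nat, t::nat \<Rightarrow> real). t 0 = x \<and> t n = y \<and> (\<forall>i<n. t i \<le> t (Suc i))}"
    "ereal (y - x - \<delta>) < ereal (\<Sum>i<fst nt. dist (\<gamma> (snd nt i)) (\<gamma> (snd nt (Suc i))))"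
    unfolding curve_length_def less_SUP_iff by blast
  then show ?thesis by (cases nt) auto
qed

lemma tc_bound:
  fixes \<gamma> :: "real \<Rightarrow> 'a::euclidean_space"
  assumes "finite_total_curvature \<gamma> L cl"
  shows "\<exists>K. \<forall>n t. (\<forall>i<n. t i < t (Suc i)) \<longrightarrow> 0 \<le> t 0 \<longrightarrow> t n < L \<longrightarrow> turn \<gamma> n t \<le> K"
proof -
  define TC where "TC = total_curvature \<gamma> L cl"
  have fin: "TC < \<infinity>" using assms unfolding finite_total_curvature_def TC_def .
  have main: "ereal (turn \<gamma> n t) \<le> TC" if t: "\<forall>i<n. t i < t (Suc i)" "0 \<le> t 0" "t n < L" "2 \<le> n" for n t
  proof (cases cl)
    case False
    have mem: "(n, t) \<in> {(n::nat, t::nat \<Rightarrow> real). 0 \<le> t 0 \<and> t n \<le> L \<and> (\<forall>i<n. t i < t (Suc i))}"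
      using t by auto
    show ?thesis unfolding TC_def total_curvature_def using False
      by (simp only: if_False) (rule order_trans[OF _ SUP_upper[OF mem]], simp add: turn_def)
  next
    case True
    have mem: "(Suc n, t) \<in> {(n::nat, t::nat \<Rightarrow> real). 3 \<le> n \<and> 0 \<le> t 0 \<and> t (n - 1) < L \<and>
                    (\<forall>i. Suc i < n \<longrightarrow> t i < t (Suc i))}"
      using t by auto
    define f where "f = (\<lambda>i. vangle (\<gamma> (t i) - \<gamma> (t ((i + Suc n - 1) mod Suc n)))
                    (\<gamma> (t ((i + 1) mod Suc n)) - \<gamma> (t i)))"
    have "turn \<gamma> n t = (\<Sum>i\<in>{1..<n}. f i)"
      unfolding turn_def f_def
    proof (intro sum.cong refl)
      fix i assume i: "i \<in> {1..<n}"
      have e1: "(i + Suc n - 1) mod Suc n = i - 1"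
      proof -
        have h: "i + Suc n - 1 = (i - 1) + Suc n" using i by auto
        have lt: "i - 1 < Suc n" using i by auto
        have "((i - 1) + Suc n) mod Suc n = i - 1" by (simp only: mod_add_self2 mod_less[OF lt])
        then show ?thesis unfolding h .
      qed
      have e2: "(i + 1) mod Suc n = Suc i" using i by auto
      show "vangle (\<gamma> (t i) - \<gamma> (t (i - 1))) (\<gamma> (t (Suc i)) - \<gamma> (t i)) =
        vangle (\<gamma> (t i) - \<gamma> (t ((i + Suc n - 1) mod Suc n))) (\<gamma> (t ((i + 1) mod Suc n)) - \<gamma> (t i))"
        unfolding e1 e2 ..
    qed
    also have "\<dots> \<le> (\<Sum>i<Suc n. f i)"
      by (rule sum_mono2) (auto simp: f_def vangle_nonneg)
    finally have "ereal (turn \<gamma> n t) \<le> ereal (\<Sum>i<Suc n. f i)" by simp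
    also have "\<dots> \<le> TC" unfolding TC_def total_curvature_def using True
      by (simp only: if_True) (rule order_trans[OF _ SUP_upper[OF mem]], simp add: f_def)
    finally show ?thesis .
  qed
  define K where "K = max 0 (real_of_ereal TC)"
  have "turn \<gamma> n t \<le> K" if t: "\<forall>i<n. t i < t (Suc i)" "0 \<le> t 0" "t n < L" for n t
  proof (cases "2 \<le> n")
    case True
    have le: "ereal (turn \<gamma> n t) \<le> TC" using main[OF t True] .
    then have "TC \<noteq> -\<infinity>" by auto
    then have "turn \<gamma> n t \<le> real_of_ereal TC" using le fin by (cases TC) auto
    then show ?thesis unfolding K_def by simp
  next
    case False
    then have "{1..<n} = {}" by auto
    then show ?thesis unfolding turn_def K_def by simp
  qed
  then show ?thesis by blast
qed

lemma side_right:
  fixes \<gamma> :: "real \<Rightarrow> 'a::euclidean_space"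
  assumes inj: "inj_on \<gamma> {0..<L}"
    and CL: "\<And>x y. 0 \<le> x \<Longrightarrow> x \<le> y \<Longrightarrow> y \<le> L \<Longrightarrow> curve_length \<gamma> x y = ereal (y - x)"
    and TB: "\<And>n t. (\<forall>i<n. t i < t (Suc i)) \<Longrightarrow> 0 \<le> t 0 \<Longrightarrow> t n < L \<Longrightarrow> turn \<gamma> n t \<le> K"
    and c: "0 \<le> c" "c + e0 < L" "0 < e0"
  shows "side (\<lambda>h. \<gamma> (c + h)) e0 K"
proof
  show "0 < e0" by fact
  show "inj_on (\<lambda>h. \<gamma> (c + h)) {0<..e0}"
    unfolding inj_on_def
  proof (intro ballI impI)
    fix x y assume xy: "x \<in> {0<..e0}" "y \<in> {0<..e0}" "\<gamma> (c + x) = \<gamma> (c + y)"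
    have "c + x \<in> {0..<L}" "c + y \<in> {0..<L}" using xy c by auto
    then have "c + x = c + y" using inj xy(3) unfolding inj_on_def by blast
    then show "x = y" by simp
  qed
  fix a b assume ab: "0 \<le> a" "a \<le> b" "b \<le> e0"
  then have cl: "curve_length \<gamma> (c + a) (c + b) = ereal ((c + b) - (c + a))" using c by (intro CL) auto
  show "dist (\<gamma> (c + a)) (\<gamma> (c + b)) \<le> b - a" using cl_lip[OF cl] ab by simp
  fix \<delta> :: real assume \<delta>: "0 < \<delta>"
  obtain n t where t: "t 0 = c + a" "t n = c + b" "\<forall>i<n. t i \<le> t (Suc i)"
     "(c + b) - (c + a) - \<delta> < (\<Sum>i<n. dist (\<gamma> (t i)) (\<gamma> (t (Suc i))))"
    using cl_part[OF cl \<delta>] by blast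
  show "\<exists>n t. t 0 = a \<and> t n = b \<and> (\<forall>i<n. t i \<le> t (Suc i)) \<and>
        b - a - \<delta> < (\<Sum>i<n. dist (\<gamma> (c + t i)) (\<gamma> (c + t (Suc i))))"
    using t by (intro exI[of _ n] exI[of _ "\<lambda>i. t i - c"]) auto
next
  fix n t assume t: "\<forall>i<n. t i < t (Suc i)" "\<forall>i\<le>n. 0 < t i \<and> t i \<le> e0"
  have "turn (\<lambda>h. \<gamma> (c + h)) n t = turn \<gamma> n (\<lambda>i. c + t i)" unfolding turn_def by simp
  also have "\<dots> \<le> K" using t c by (intro TB) auto
  finally show "turn (\<lambda>h. \<gamma> (c + h)) n t \<le> K" .
qed

lemma side_left:
  fixes \<gamma> :: "real \<Rightarrow> 'a::euclidean_space"
  assumes inj: "inj_on \<gamma> {0..<L}"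
    and CL: "\<And>x y. 0 \<le> x \<Longrightarrow> x \<le> y \<Longrightarrow> y \<le> L \<Longrightarrow> curve_length \<gamma> x y = ereal (y - x)"
    and TB: "\<And>n t. (\<forall>i<n. t i < t (Suc i)) \<Longrightarrow> 0 \<le> t 0 \<Longrightarrow> t n < L \<Longrightarrow> turn \<gamma> n t \<le> K"
    and c: "e0 \<le> c" "c \<le> L" "0 < e0"
  shows "side (\<lambda>h. \<gamma> (c - h)) e0 K"
proof
  show "0 < e0" by fact
  show "inj_on (\<lambda>h. \<gamma> (c - h)) {0<..e0}"
    unfolding inj_on_def
  proof (intro ballI impI)
    fix x y assume xy: "x \<in> {0<..e0}" "y \<in> {0<..e0}" "\<gamma> (c - x) = \<gamma> (c - y)"
    have "c - x \<in> {0..<L}" "c - y \<in> {0..<L}" using xy c by auto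
    then have "c - x = c - y" using inj xy(3) unfolding inj_on_def by blast
    then show "x = y" by simp
  qed
  fix a b assume ab: "0 \<le> a" "a \<le> b" "b \<le> e0"
  then have cl: "curve_length \<gamma> (c - b) (c - a) = ereal ((c - a) - (c - b))" using c by (intro CL) auto
  show "dist (\<gamma> (c - a)) (\<gamma> (c - b)) \<le> b - a" using cl_lip[OF cl] ab by (simp add: dist_commute)
  fix \<delta> :: real assume \<delta>: "0 < \<delta>"
  obtain n t where t: "t 0 = c - b" "t n = c - a" "\<forall>i<n. t i \<le> t (Suc i)"
     "(c - a) - (c - b) - \<delta> < (\<Sum>i<n. dist (\<gamma> (t i)) (\<gamma> (t (Suc i))))"
    using cl_part[OF cl \<delta>] by blast
  define t' where "t' i = c - t (n - i)" for i
  have "(\<Sum>i<n. dist (\<gamma> (t i)) (\<gamma> (t (Suc i)))) = (\<Sum>i<n. dist (\<gamma> (t (n - Suc i))) (\<gamma> (t (Suc (n - Suc i)))))"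
    by (rule sum.nat_diff_reindex[symmetric])
  also have "\<dots> = (\<Sum>i<n. dist (\<gamma> (c - t' i)) (\<gamma> (c - t' (Suc i))))"
  proof (intro sum.cong refl)
    fix i assume "i \<in> {..<n}"
    then have "Suc (n - Suc i) = n - i" by auto
    then show "dist (\<gamma> (t (n - Suc i))) (\<gamma> (t (Suc (n - Suc i)))) = dist (\<gamma> (c - t' i)) (\<gamma> (c - t' (Suc i)))"
      unfolding t'_def by (simp add: dist_commute)
  qed
  finally have s: "(\<Sum>i<n. dist (\<gamma> (t i)) (\<gamma> (t (Suc i)))) = (\<Sum>i<n. dist (\<gamma> (c - t' i)) (\<gamma> (c - t' (Suc i))))" .
  have m: "\<forall>i<n. t' i \<le> t' (Suc i)"
  proof (intro allI impI)
    fix i assume i: "i < n"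
    then have e: "Suc (n - Suc i) = n - i" by auto
    have "n - Suc i < n" using i by auto
    then have "t (n - Suc i) \<le> t (n - i)" using t(3) e by metis
    then show "t' i \<le> t' (Suc i)" unfolding t'_def by simp
  qed
  show "\<exists>n t. t 0 = a \<and> t n = b \<and> (\<forall>i<n. t i \<le> t (Suc i)) \<and>
        b - a - \<delta> < (\<Sum>i<n. dist (\<gamma> (c - t i)) (\<gamma> (c - t (Suc i))))"
    using t s m by (intro exI[of _ n] exI[of _ t']) (auto simp: t'_def)
next
  fix n t assume t: "\<forall>i<n. t i < t (Suc i)" "\<forall>i\<le>n. 0 < t i \<and> t i \<le> e0"
  have "turn (\<lambda>h. \<gamma> (c - h)) n t = turn \<gamma> n (\<lambda>i. c - t (n - i))" by (rule turn_reverse)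
  also have "\<dots> \<le> K"
  proof (rule TB)
    show "\<forall>i<n. c - t (n - i) < c - t (n - Suc i)"
    proof (intro allI impI)
      fix i assume i: "i < n"
      then have e: "Suc (n - Suc i) = n - i" by auto
      have "n - Suc i < n" using i by auto
      then have "t (n - Suc i) < t (n - i)" using t(1) e by metis
      then show "c - t (n - i) < c - t (n - Suc i)" by simp
    qed
    show "0 \<le> c - t (n - 0)" using t(2) c by auto
    show "c - t (n - n) < L" using t(2) c by auto
  qed
  finally show "turn (\<lambda>h. \<gamma> (c - h)) n t \<le> K" .
qed




theorem lemma7p2:
  fixes \<gamma> :: "real \<Rightarrow> 'a::euclidean_space" and L s0 :: real and cl :: bool
  assumes "simple_curve \<gamma> L cl"
    and "arclength_param \<gamma> L"
    and "finite_total_curvature \<gamma> L cl"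
    and "if cl then s0 \<in> {0..<L} else s0 \<in> {0<..<L}"
  defines "r \<equiv> \<gamma> s0"
    and "D \<equiv> {(p, q). p \<in> \<gamma> ` pdom L cl \<and> q \<in> \<gamma> ` pdom L cl \<and> p \<noteq> q}"
  shows "Limsup (at (r, r) within D) (\<lambda>(p, q). ereal (distortion \<gamma> L cl p q))
           = esec (turn_angle \<gamma> s0 / 2)
       \<and> ((\<lambda>h. ereal (distortion \<gamma> L cl (\<gamma> (s0 - h)) (\<gamma> (s0 + h))))
           \<longlongrightarrow> esec (turn_angle \<gamma> s0 / 2)) (at_right 0)"
proof -
  have L0: "0 < L" using assms(1) unfolding simple_curve_def by auto
  have inj0: "inj_on \<gamma> {0..<L}"
    using assms(1) unfolding simple_curve_def by (cases cl) (auto intro: inj_on_subset)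
  have injP: "inj_on \<gamma> (pdom L cl)"
    using assms(1) unfolding simple_curve_def pdom_def by (cases cl) auto
  have cont: "continuous_on {0..L} \<gamma>"
    using assms(1) unfolding simple_curve_def by (cases cl) (auto intro: continuous_on_subset)
  have per: "\<gamma> (s + L) = \<gamma> s" if "cl" for s
    using assms(1) that unfolding simple_curve_def by auto
  have s0: "0 \<le> s0" "s0 < L" "\<not> cl \<Longrightarrow> 0 < s0" using assms(4) by (cases cl; auto)+
  have pdom_sub: "pdom L cl \<subseteq> {0..L}" unfolding pdom_def by auto
  have CL: "\<And>x y. 0 \<le> x \<Longrightarrow> x \<le> y \<Longrightarrow> y \<le> L \<Longrightarrow> curve_length \<gamma> x y = ereal (y - x)"
    using assms(2) unfolding arclength_param_def by auto
  obtain K where TB: "\<And>n t. (\<forall>i<n. t i < t (Suc i)) \<Longrightarrow> 0 \<le> t 0 \<Longrightarrow> t n < L \<Longrightarrow> turn \<gamma> n t \<le> K"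
    using tc_bound[OF assms(3)] by blast
  define cL where "cL = (if s0 = 0 then L else s0)"
  have cL: "0 < cL" "cL \<le> L" using s0 L0 unfolding cL_def by auto
  have cLeq: "\<gamma> (cL - h) = \<gamma> (s0 - h)" for h
  proof (cases "s0 = 0")
    case True
    then have "cl" using s0 by auto
    then show ?thesis using True per[of "-h"] unfolding cL_def by simp
  next
    case False then show ?thesis unfolding cL_def by simp
  qed
  define \<epsilon>0 where "\<epsilon>0 = min (L/4) (min cL (L - s0)) / 2"
  have e0: "0 < \<epsilon>0" "\<epsilon>0 \<le> cL" "s0 + \<epsilon>0 < L" "\<epsilon>0 < L/4" "\<not> cl \<Longrightarrow> \<epsilon>0 < s0"
  proof -
    define m where "m = min (L/4) (min cL (L - s0))"
    have m1: "m \<le> L/4" unfolding m_def by (rule min.cobounded1)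
    have m: "m \<le> cL" "m \<le> L - s0" "0 < m" using L0 cL s0 unfolding m_def by auto
    have e: "\<epsilon>0 = m / 2" unfolding \<epsilon>0_def m_def ..
    have "\<not> cl \<Longrightarrow> cL = s0" unfolding cL_def using s0 by auto
    then show "0 < \<epsilon>0" "\<epsilon>0 \<le> cL" "s0 + \<epsilon>0 < L" "\<epsilon>0 < L/4" "\<not> cl \<Longrightarrow> \<epsilon>0 < s0"
      using m m1 unfolding e by auto
  qed
  define gR where "gR h = \<gamma> (s0 + h)" for h
  define gL where "gL h = \<gamma> (s0 - h)" for h
  have sR: "side gR \<epsilon>0 K" unfolding gR_def
    by (rule side_right[OF inj0 CL TB]) (use s0 e0 in auto)
  have "side (\<lambda>h. \<gamma> (cL - h)) \<epsilon>0 K"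
    by (rule side_left[OF inj0 CL TB]) (use cL e0 in auto)
  moreover have "(\<lambda>h. \<gamma> (cL - h)) = gL" unfolding gL_def using cLeq by auto
  ultimately have sL: "side gL \<epsilon>0 K" by simp
  interpret R: side gR \<epsilon>0 K by (rule sR)
  interpret Lf: side gL \<epsilon>0 K by (rule sL)
  obtain TR where TR: "norm TR = 1" "((\<lambda>h. (gR h - gR 0) /\<^sub>R h) \<longlongrightarrow> TR) (at_right 0)"
    using R.tangent by blast
  obtain TL where TL: "norm TL = 1" "((\<lambda>h. (gL h - gL 0) /\<^sub>R h) \<longlongrightarrow> TL) (at_right 0)"
    using Lf.tangent by blast
  have g0: "gR 0 = r" "gL 0 = r" unfolding gR_def gL_def r_def by simp_all
  have Tp: "T_plus \<gamma> s0 = TR"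
    unfolding T_plus_def using TR(2) unfolding gR_def by (simp add: tendsto_Lim[OF trivial_limit_at_right_real])
  have Tm: "T_minus \<gamma> s0 = - TL"
  proof -
    have "((\<lambda>h. - ((gL h - gL 0) /\<^sub>R h)) \<longlongrightarrow> - TL) (at_right 0)" by (intro tendsto_minus TL(2))
    then have "((\<lambda>h. (\<gamma> s0 - \<gamma> (s0 - h)) /\<^sub>R h) \<longlongrightarrow> - TL) (at_right 0)"
      unfolding gL_def by (simp add: algebra_simps scaleR_diff_right)
    then show ?thesis unfolding T_minus_def by (rule tendsto_Lim[OF trivial_limit_at_right_real])
  qed
  define \<alpha> where "\<alpha> = turn_angle \<gamma> s0"
  have \<alpha>: "\<alpha> = vangle (- TL) TR" unfolding \<alpha>_def turn_angle_def Tp Tm ..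
  define x where "x = - (TL \<bullet> TR)"
  have cosa: "cos \<alpha> = x" unfolding \<alpha> x_def cos_vangle using TL(1) TR(1) by simp
  have x1: "x \<le> 1" "-1 \<le> x" using cosa cos_le_one[of \<alpha>] cos_ge_minus_one[of \<alpha>] by auto
  define c where "c = cos (\<alpha> / 2)"
  have a0: "0 \<le> \<alpha>" "\<alpha> \<le> pi" unfolding \<alpha> by (simp_all add: vangle_nonneg vangle_le_pi)
  have c0: "0 \<le> c" unfolding c_def using a0 by (intro cos_ge_zero) auto
  have c1: "c \<le> 1" unfolding c_def by simp
  have cx: "x = 2 * c^2 - 1" using cos_double_cos[of "\<alpha>/2"] cosa unfolding c_def by simp
  have key: "c * (h1 + h2) \<le> norm (h2 *\<^sub>R TR - h1 *\<^sub>R TL)" if h: "0 \<le> h1" "0 \<le> h2" for h1 h2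
  proof -
    have "(norm (h2 *\<^sub>R TR - h1 *\<^sub>R TL))^2 = (h2 *\<^sub>R TR - h1 *\<^sub>R TL) \<bullet> (h2 *\<^sub>R TR - h1 *\<^sub>R TL)"
      by (rule power2_norm_eq_inner)
    also have "\<dots> = h2^2 * (TR \<bullet> TR) + h1^2 * (TL \<bullet> TL) - 2 * h1 * h2 * (TL \<bullet> TR)"
      by (simp add: inner_diff_left inner_diff_right inner_commute power2_eq_square algebra_simps)
    also have "\<dots> = h1^2 + h2^2 + 2 * h1 * h2 * x"
      using TL(1) TR(1) unfolding x_def by (simp add: dot_square_norm)
    finally have n2: "(norm (h2 *\<^sub>R TR - h1 *\<^sub>R TL))^2 = h1^2 + h2^2 + 2 * h1 * h2 * x" .
    have "(c * (h1 + h2))^2 = (x + 1) / 2 * (h1 + h2)^2" using cx by (simp add: power_mult_distrib)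
    moreover have "(x + 1) / 2 * (h1 + h2)^2 \<le> h1^2 + h2^2 + 2 * h1 * h2 * x"
    proof -
      have "h1^2 + h2^2 + 2 * h1 * h2 * x - (x + 1) / 2 * (h1 + h2)^2 = (1 - x) * (h1 - h2)^2 / 2"
        by (simp add: power2_eq_square field_simps)
      moreover have "0 \<le> (1 - x) * (h1 - h2)^2 / 2" using x1 by simp
      ultimately show ?thesis by linarith
    qed
    ultimately have "(c * (h1 + h2))^2 \<le> (norm (h2 *\<^sub>R TR - h1 *\<^sub>R TL))^2" using n2 by simp
    then show ?thesis by (rule power2_le_imp_le) simp
  qed
  have nD: "norm (TR - TL) = 2 * c"
  proof -
    have "(norm (TR - TL))^2 = TR \<bullet> TR + TL \<bullet> TL - 2 * (TL \<bullet> TR)"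
      by (simp add: power2_norm_eq_inner inner_diff_left inner_diff_right inner_commute)
    also have "\<dots> = 4 * c^2" using TL(1) TR(1) cx unfolding x_def by (simp add: dot_square_norm)
    also have "\<dots> = (2 * c)^2" by (simp add: power2_eq_square)
    finally have "(norm (TR - TL))^2 = (2 * c)^2" .
    then show ?thesis by (rule power2_eq_imp_eq) (use c0 in auto)
  qed
  have esec_eq: "esec (turn_angle \<gamma> s0 / 2) = (if c = 0 then \<infinity> else ereal (1 / c))"
    unfolding esec_def c_def \<alpha>_def by simp

  have param: "param_of \<gamma> L cl (\<gamma> s) = s" if "s \<in> pdom L cl" for s
    unfolding param_of_def
  proof (rule the_equality)
    show "s \<in> pdom L cl \<and> \<gamma> s = \<gamma> s" using that by simp
    fix s' assume "s' \<in> pdom L cl \<and> \<gamma> s' = \<gamma> s"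
    then show "s' = s" using injP that unfolding inj_on_def by blast
  qed
  have rep: "\<exists>s\<in>pdom L cl. \<gamma> s = \<gamma> (s0 + a) \<and> (s = s0 + a \<or> (cl \<and> s = s0 + a + L))"
    if a: "\<bar>a\<bar> < \<epsilon>0" for a
  proof (cases cl)
    case False
    then have "s0 + a \<in> pdom L cl" using a e0 s0 unfolding pdom_def by auto
    then show ?thesis by blast
  next
    case True
    show ?thesis
    proof (cases "0 \<le> s0 + a")
      case True
      then have "s0 + a \<in> pdom L cl" using a e0 s0 \<open>cl\<close> unfolding pdom_def by auto
      then show ?thesis by blast
    next
      case False
      then have "s0 + a + L \<in> pdom L cl" using a e0 s0 \<open>cl\<close> unfolding pdom_def by auto
      moreover have "\<gamma> (s0 + a + L) = \<gamma> (s0 + a)" using per[OF \<open>cl\<close>] by simp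
      ultimately show ?thesis using \<open>cl\<close> by blast
    qed
  qed
  have Lenab: "Len \<gamma> L cl (\<gamma> (s0 + a)) (\<gamma> (s0 + b)) = \<bar>a - b\<bar>"
    if a: "\<bar>a\<bar> < \<epsilon>0" and b: "\<bar>b\<bar> < \<epsilon>0" for a b
  proof -
    obtain sa where sa: "sa \<in> pdom L cl" "\<gamma> sa = \<gamma> (s0 + a)" "sa = s0 + a \<or> (cl \<and> sa = s0 + a + L)"
      using rep[OF a] by blast
    obtain sb where sb: "sb \<in> pdom L cl" "\<gamma> sb = \<gamma> (s0 + b)" "sb = s0 + b \<or> (cl \<and> sb = s0 + b + L)"
      using rep[OF b] by blast
    have pa: "param_of \<gamma> L cl (\<gamma> (s0 + a)) = sa" using param[OF sa(1)] sa(2) by simp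
    have pb: "param_of \<gamma> L cl (\<gamma> (s0 + b)) = sb" using param[OF sb(1)] sb(2) by simp
    have ra: "0 \<le> sa" "sa \<le> L" "cl \<Longrightarrow> sa < L" using sa(1) unfolding pdom_def by (auto split: if_splits)
    have rb: "0 \<le> sb" "sb \<le> L" "cl \<Longrightarrow> sb < L" using sb(1) unfolding pdom_def by (auto split: if_splits)
    show ?thesis
    proof (cases cl)
      case False
      then show ?thesis unfolding Len_def Let_def pa pb using sa(3) sb(3) by auto
    next
      case True
      have "min \<bar>sa - sb\<bar> (L - \<bar>sa - sb\<bar>) = \<bar>a - b\<bar>"
        using sa(3) sb(3) ra rb True a b e0(4) by (auto simp: min_def abs_if split: if_splits)
      then show ?thesis unfolding Len_def Let_def pa pb using True by simp
    qed
  qed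
  have neq: "a = b" if a: "\<bar>a\<bar> < \<epsilon>0" and b: "\<bar>b\<bar> < \<epsilon>0" and e: "\<gamma> (s0 + a) = \<gamma> (s0 + b)" for a b
  proof -
    have "Len \<gamma> L cl (\<gamma> (s0 + a)) (\<gamma> (s0 + a)) = 0" unfolding Len_def Let_def using L0 by simp
    then have "\<bar>a - b\<bar> = 0" using Lenab[OF a b] e by simp
    then show ?thesis by simp
  qed
  have loc: "\<exists>\<rho>>0. \<forall>s\<in>pdom L cl. dist (\<gamma> s) r < \<rho> \<longrightarrow> (\<exists>a. \<bar>a\<bar> < \<epsilon> \<and> \<gamma> (s0 + a) = \<gamma> s)"
    if \<epsilon>: "0 < \<epsilon>" for \<epsilon>
  proof -
    have clo: "closed {s::real. \<epsilon> \<le> \<bar>s - k\<bar>}" for k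
      by (intro closed_Collect_le continuous_intros)
    obtain S where S: "compact S" "S \<subseteq> {0..L}" "r \<notin> \<gamma> ` S"
      "\<forall>s\<in>{0..L}. s \<notin> S \<longrightarrow> (\<exists>a. \<bar>a\<bar> < \<epsilon> \<and> \<gamma> (s0 + a) = \<gamma> s)"
    proof (cases cl)
      case False
      define S where "S = {0..L} \<inter> {s. \<epsilon> \<le> \<bar>s - s0\<bar>}"
      have "compact S" unfolding S_def by (intro compact_Int_closed compact_Icc clo)
      moreover have "S \<subseteq> {0..L}" unfolding S_def by auto
      moreover have "r \<notin> \<gamma> ` S"
      proof
        assume "r \<in> \<gamma> ` S"
        then obtain s where s: "s \<in> S" "\<gamma> s = \<gamma> s0" unfolding r_def by auto
        have "s \<in> pdom L cl" "s0 \<in> pdom L cl" using s(1) s0 False unfolding S_def pdom_def by auto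
        then have "s = s0" using injP s(2) unfolding inj_on_def by blast
        then show False using s(1) \<epsilon> unfolding S_def by auto
      qed
      moreover have "\<forall>s\<in>{0..L}. s \<notin> S \<longrightarrow> (\<exists>a. \<bar>a\<bar> < \<epsilon> \<and> \<gamma> (s0 + a) = \<gamma> s)"
      proof (intro ballI impI)
        fix s assume "s \<in> {0..L}" "s \<notin> S"
        then have "\<bar>s - s0\<bar> < \<epsilon>" unfolding S_def by auto
        then show "\<exists>a. \<bar>a\<bar> < \<epsilon> \<and> \<gamma> (s0 + a) = \<gamma> s" by (intro exI[of _ "s - s0"]) auto
      qed
      ultimately show ?thesis using that by blast
    next
      case True
      define S where "S = {0..L} \<inter> {s. \<epsilon> \<le> \<bar>s - s0\<bar>} \<inter> {s. \<epsilon> \<le> \<bar>s - (s0 + L)\<bar>} \<inter> {s. \<epsilon> \<le> \<bar>s - (s0 - L)\<bar>}"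
      have "compact S" unfolding S_def
        by (intro compact_Int_closed compact_Icc clo)
      moreover have "S \<subseteq> {0..L}" unfolding S_def by auto
      moreover have "r \<notin> \<gamma> ` S"
      proof
        assume "r \<in> \<gamma> ` S"
        then obtain s where s: "s \<in> S" "\<gamma> s = \<gamma> s0" unfolding r_def by auto
        show False
        proof (cases "s < L")
          case True
          have "s \<in> {0..<L}" "s0 \<in> {0..<L}" using s(1) s0 True unfolding S_def by auto
          then have "s = s0" using inj0 s(2) unfolding inj_on_def by blast
          then show False using s(1) \<epsilon> unfolding S_def by auto
        next
          case False
          then have sL: "s = L" using s(1) unfolding S_def by auto
          have "\<gamma> L = \<gamma> 0" using per[OF \<open>cl\<close>, of 0] by simp
          then have "\<gamma> 0 = \<gamma> s0" using s(2) sL by simp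
          moreover have "0 \<in> {0..<L}" "s0 \<in> {0..<L}" using L0 s0 by auto
          ultimately have "s0 = 0" using inj0 unfolding inj_on_def by metis
          then show False using s(1) sL \<epsilon> unfolding S_def by auto
        qed
      qed
      moreover have "\<forall>s\<in>{0..L}. s \<notin> S \<longrightarrow> (\<exists>a. \<bar>a\<bar> < \<epsilon> \<and> \<gamma> (s0 + a) = \<gamma> s)"
      proof (intro ballI impI)
        fix s assume s: "s \<in> {0..L}" "s \<notin> S"
        then consider "\<bar>s - s0\<bar> < \<epsilon>" | "\<bar>s - (s0 + L)\<bar> < \<epsilon>" | "\<bar>s - (s0 - L)\<bar> < \<epsilon>"
          unfolding S_def by force
        then show "\<exists>a. \<bar>a\<bar> < \<epsilon> \<and> \<gamma> (s0 + a) = \<gamma> s"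
        proof cases
          case 1 then show ?thesis by (intro exI[of _ "s - s0"]) auto
        next
          case 2
          have "\<gamma> (s0 + (s - (s0 + L))) = \<gamma> s" using per[OF \<open>cl\<close>, of "s - L"] by simp
          then show ?thesis using 2 by (intro exI[of _ "s - (s0 + L)"]) auto
        next
          case 3
          have "\<gamma> (s0 + (s - (s0 - L))) = \<gamma> s" using per[OF \<open>cl\<close>, of s] by simp
          then show ?thesis using 3 by (intro exI[of _ "s - (s0 - L)"]) auto
        qed
      qed
      ultimately show ?thesis using that by blast
    qed
    have "compact (\<gamma> ` S)" by (rule compact_continuous_image[OF continuous_on_subset[OF cont S(2)] S(1)])
    then have "closed (\<gamma> ` S)" by (rule compact_imp_closed)
    from separate_point_closed[OF this S(3)] obtain \<rho> where \<rho>: "0 < \<rho>" "\<forall>x\<in>\<gamma> ` S. \<rho> \<le> dist r x"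
      by blast
    show ?thesis
    proof (rule exI[of _ \<rho>], intro conjI ballI impI)
      fix s assume s: "s \<in> pdom L cl" "dist (\<gamma> s) r < \<rho>"
      have "s \<notin> S"
      proof
        assume "s \<in> S"
        then have "\<rho> \<le> dist r (\<gamma> s)" using \<rho>(2) by blast
        then show False using s(2) by (simp add: dist_commute)
      qed
      then show "\<exists>a. \<bar>a\<bar> < \<epsilon> \<and> \<gamma> (s0 + a) = \<gamma> s" using S(4) s(1) pdom_sub by blast
    qed (rule \<rho>(1))
  qed
  define Dv where "Dv h = (gR h - gR 0) /\<^sub>R h - (gL h - gL 0) /\<^sub>R h" for h
  have Dlim: "(Dv \<longlongrightarrow> TR - TL) (at_right 0)" unfolding Dv_def by (intro tendsto_diff TR(2) TL(2))
  have nDlim: "((\<lambda>h. norm (Dv h)) \<longlongrightarrow> 2 * c) (at_right 0)" using tendsto_norm[OF Dlim] nD by simp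
  have evD: "\<forall>\<^sub>F h in at_right 0. distortion \<gamma> L cl (\<gamma> (s0 - h)) (\<gamma> (s0 + h)) = 2 / norm (Dv h) \<and> 0 < norm (Dv h)"
    unfolding eventually_at_right_field
  proof (rule exI[of _ \<epsilon>0], intro conjI allI impI)
    fix h :: real assume h: "0 < h" "h < \<epsilon>0"
    have a1: "\<bar>- h\<bar> < \<epsilon>0" "\<bar>h\<bar> < \<epsilon>0" using h by auto
    have Le: "Len \<gamma> L cl (\<gamma> (s0 - h)) (\<gamma> (s0 + h)) = 2 * h"
      using Lenab[OF a1] h by simp
    have ne: "gR h \<noteq> gL h"
    proof
      assume "gR h = gL h"
      then have "\<gamma> (s0 + - h) = \<gamma> (s0 + h)" unfolding gR_def gL_def by simp
      then have "- h = h" by (rule neq[OF a1])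
      then show False using h by simp
    qed
    have DvE: "Dv h = (1 / h) *\<^sub>R (gR h - gL h)" unfolding Dv_def using g0
      by (simp add: algebra_simps scaleR_diff_right divide_inverse_commute)
    have nDv: "norm (Dv h) = norm (gR h - gL h) / h" unfolding DvE using h by simp
    have dd: "dist (\<gamma> (s0 - h)) (\<gamma> (s0 + h)) = norm (gR h - gL h)"
      unfolding gR_def gL_def by (simp add: dist_norm norm_minus_commute)
    have np: "0 < norm (gR h - gL h)" using ne by simp
    show "distortion \<gamma> L cl (\<gamma> (s0 - h)) (\<gamma> (s0 + h)) = 2 / norm (Dv h)"
      unfolding distortion_def Le dd nDv using h np by (simp add: field_simps)
    show "0 < norm (Dv h)" unfolding nDv using h np by simp
  qed (use e0 in auto)
  have lim2: "((\<lambda>h. ereal (distortion \<gamma> L cl (\<gamma> (s0 - h)) (\<gamma> (s0 + h)))) \<longlongrightarrow> esec (turn_angle \<gamma> s0 / 2)) (at_right 0)"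
  proof (cases "c = 0")
    case False
    then have cp: "0 < c" using c0 by simp
    have "((\<lambda>h. 2 / norm (Dv h)) \<longlongrightarrow> 2 / (2 * c)) (at_right 0)"
      by (rule tendsto_divide[OF tendsto_const nDlim]) (use cp in simp)
    then have "((\<lambda>h. ereal (2 / norm (Dv h))) \<longlongrightarrow> ereal (1 / c)) (at_right 0)"
      using cp by (intro tendsto_ereal) simp
    moreover have "\<forall>\<^sub>F h in at_right 0. ereal (2 / norm (Dv h)) = ereal (distortion \<gamma> L cl (\<gamma> (s0 - h)) (\<gamma> (s0 + h)))"
      using evD by eventually_elim simp
    ultimately have "((\<lambda>h. ereal (distortion \<gamma> L cl (\<gamma> (s0 - h)) (\<gamma> (s0 + h)))) \<longlongrightarrow> ereal (1 / c)) (at_right 0)"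
      by (rule Lim_transform_eventually)
    then show ?thesis unfolding esec_eq using False by simp
  next
    case True
    have Einf: "esec (turn_angle \<gamma> s0 / 2) = \<infinity>" using True esec_eq by simp
    show ?thesis unfolding Einf tendsto_PInfty
    proof (intro allI)
      fix y :: real
      have "\<forall>\<^sub>F h in at_right 0. norm (Dv h) < 2 / (\<bar>y\<bar> + 1)"
        using nDlim True by (intro order_tendstoD(2)) auto
      then show "\<forall>\<^sub>F h in at_right 0. ereal y < ereal (distortion \<gamma> L cl (\<gamma> (s0 - h)) (\<gamma> (s0 + h)))"
        using evD
      proof eventually_elim
        case (elim h)
        then have n: "0 < norm (Dv h)" "norm (Dv h) * (\<bar>y\<bar> + 1) < 2"
          by (auto simp: field_simps)
        then have "\<bar>y\<bar> + 1 < 2 / norm (Dv h)" by (simp add: field_simps)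
        then show ?case using elim by simp
      qed
    qed
  qed
  have bnd: "\<exists>\<epsilon>>0. \<epsilon> \<le> \<epsilon>0 \<and> (\<forall>a b. \<bar>a\<bar> < \<epsilon> \<longrightarrow> \<bar>b\<bar> < \<epsilon> \<longrightarrow> a \<noteq> b \<longrightarrow>
              (c - \<eta>) * \<bar>a - b\<bar> \<le> dist (\<gamma> (s0 + a)) (\<gamma> (s0 + b)))" if \<eta>: "0 < \<eta>" for \<eta>
  proof -
    obtain \<epsilon>R where eR: "0 < \<epsilon>R" "\<epsilon>R \<le> \<epsilon>0" and ER: "\<forall>a b. 0 \<le> a \<longrightarrow> a \<le> b \<longrightarrow> b \<le> \<epsilon>R \<longrightarrow>
            (1 - \<eta>) * (b - a) \<le> dist (gR a) (gR b)" using R.lower[OF \<eta>] by blast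
    obtain \<epsilon>L where eL: "0 < \<epsilon>L" "\<epsilon>L \<le> \<epsilon>0" and EL: "\<forall>a b. 0 \<le> a \<longrightarrow> a \<le> b \<longrightarrow> b \<le> \<epsilon>L \<longrightarrow>
            (1 - \<eta>) * (b - a) \<le> dist (gL a) (gL b)" using Lf.lower[OF \<eta>] by blast
    have "\<forall>\<^sub>F h in at_right 0. dist ((gR h - gR 0) /\<^sub>R h) TR < \<eta>" using tendstoD[OF TR(2) \<eta>] .
    then obtain bR where bR: "0 < bR" "\<And>h. 0 < h \<Longrightarrow> h < bR \<Longrightarrow> dist ((gR h - gR 0) /\<^sub>R h) TR < \<eta>"
      unfolding eventually_at_right_field by auto
    have "\<forall>\<^sub>F h in at_right 0. dist ((gL h - gL 0) /\<^sub>R h) TL < \<eta>" using tendstoD[OF TL(2) \<eta>] .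
    then obtain bL where bL: "0 < bL" "\<And>h. 0 < h \<Longrightarrow> h < bL \<Longrightarrow> dist ((gL h - gL 0) /\<^sub>R h) TL < \<eta>"
      unfolding eventually_at_right_field by auto
    have errR: "norm (gR h - gR 0 - h *\<^sub>R TR) \<le> \<eta> * h" if "0 < h" "h < bR" for h
    proof -
      have "gR h - gR 0 - h *\<^sub>R TR = h *\<^sub>R ((gR h - gR 0) /\<^sub>R h - TR)" using that by (simp add: algebra_simps)
      then have "norm (gR h - gR 0 - h *\<^sub>R TR) = h * dist ((gR h - gR 0) /\<^sub>R h) TR"
        using that by (simp add: dist_norm)
      then show ?thesis using bR(2)[OF that] that by (simp add: mult.commute)
    qed
    have errL: "norm (gL h - gL 0 - h *\<^sub>R TL) \<le> \<eta> * h" if "0 < h" "h < bL" for h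
    proof -
      have "gL h - gL 0 - h *\<^sub>R TL = h *\<^sub>R ((gL h - gL 0) /\<^sub>R h - TL)" using that by (simp add: algebra_simps)
      then have "norm (gL h - gL 0 - h *\<^sub>R TL) = h * dist ((gL h - gL 0) /\<^sub>R h) TL"
        using that by (simp add: dist_norm)
      then show ?thesis using bL(2)[OF that] that by (simp add: mult.commute)
    qed
    define \<epsilon> where "\<epsilon> = min (min \<epsilon>R \<epsilon>L) (min bR bL)"
    have eps: "0 < \<epsilon>" "\<epsilon> \<le> \<epsilon>R" "\<epsilon> \<le> \<epsilon>L" "\<epsilon> \<le> bR" "\<epsilon> \<le> bL" "\<epsilon> \<le> \<epsilon>0"
      using eR eL bR bL unfolding \<epsilon>_def by auto
    have lt: "(c - \<eta>) * (b - a) \<le> dist (\<gamma> (s0 + a)) (\<gamma> (s0 + b))"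
      if ab: "\<bar>a\<bar> < \<epsilon>" "\<bar>b\<bar> < \<epsilon>" "a < b" for a b
    proof -
      have cm: "(c - \<eta>) * (b - a) \<le> (1 - \<eta>) * (b - a)" using c1 ab by (intro mult_right_mono) auto
      consider "0 \<le> a" | "b \<le> 0" | "a < 0" "0 < b" by linarith
      then show ?thesis
      proof cases
        case 1
        have "(1 - \<eta>) * (b - a) \<le> dist (gR a) (gR b)" using ER 1 ab eps by auto
        then show ?thesis using cm unfolding gR_def by linarith
      next
        case 2
        have "(1 - \<eta>) * (- a - - b) \<le> dist (gL (- b)) (gL (- a))" using EL[rule_format, of "- b" "- a"] 2 ab eps by auto
        then show ?thesis using cm unfolding gL_def by (simp add: dist_commute)
      next
        case 3
        define h1 where "h1 = - a"
        define h2 where "h2 = b"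
        have h: "0 < h1" "h1 < bL" "0 < h2" "h2 < bR" using 3 ab eps unfolding h1_def h2_def by auto
        define ER' where "ER' = gR h2 - gR 0 - h2 *\<^sub>R TR"
        define EL' where "EL' = gL h1 - gL 0 - h1 *\<^sub>R TL"
        have nE: "norm ER' \<le> \<eta> * h2" "norm EL' \<le> \<eta> * h1"
          unfolding ER'_def EL'_def using errR[of h2] errL[of h1] h by auto
        have eq: "\<gamma> (s0 + b) - \<gamma> (s0 + a) = (h2 *\<^sub>R TR - h1 *\<^sub>R TL) + (ER' - EL')"
          unfolding ER'_def EL'_def h1_def h2_def gR_def gL_def by (simp add: algebra_simps)
        have "norm (h2 *\<^sub>R TR - h1 *\<^sub>R TL) \<le> norm (\<gamma> (s0 + b) - \<gamma> (s0 + a)) + norm (ER' - EL')"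
          unfolding eq using norm_triangle_ineq4[of "(h2 *\<^sub>R TR - h1 *\<^sub>R TL) + (ER' - EL')" "ER' - EL'"]
          by simp
        moreover have "norm (ER' - EL') \<le> norm ER' + norm EL'" by (rule norm_triangle_ineq4)
        moreover have "c * (h1 + h2) \<le> norm (h2 *\<^sub>R TR - h1 *\<^sub>R TL)" using key h by auto
        ultimately have "c * (h1 + h2) - \<eta> * (h1 + h2) \<le> norm (\<gamma> (s0 + b) - \<gamma> (s0 + a))"
          using nE by (simp add: algebra_simps)
        moreover have "b - a = h1 + h2" unfolding h1_def h2_def by simp
        ultimately show ?thesis by (simp add: dist_norm norm_minus_commute algebra_simps)
      qed
    qed
    show ?thesis
    proof (rule exI[of _ \<epsilon>], intro conjI allI impI)
      fix a b assume ab: "\<bar>a\<bar> < \<epsilon>" "\<bar>b\<bar> < \<epsilon>" "a \<noteq> b"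
      show "(c - \<eta>) * \<bar>a - b\<bar> \<le> dist (\<gamma> (s0 + a)) (\<gamma> (s0 + b))"
      proof (cases "a < b")
        case True then show ?thesis using lt[of a b] ab by simp
      next
        case False
        then have "b < a" using ab by simp
        then show ?thesis using lt[of b a] ab by (simp add: dist_commute)
      qed
    qed (use eps in auto)
  qed
  define F where "F = (\<lambda>(p, q). ereal (distortion \<gamma> L cl p q))"
  have up: "Limsup (at (r, r) within D) F \<le> esec (turn_angle \<gamma> s0 / 2)"
    unfolding Limsup_le_iff
  proof (intro allI impI)
    fix y assume y: "esec (turn_angle \<gamma> s0 / 2) < y"
    then have cn: "c \<noteq> 0" unfolding esec_eq by (auto split: if_splits)
    then have cp: "0 < c" using c0 by simp
    have y1: "ereal (1 / c) < y" using y cn unfolding esec_eq by simp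
    show "\<forall>\<^sub>F x in at (r, r) within D. F x < y"
    proof (cases y)
      case PInf
      then show ?thesis unfolding F_def by (intro always_eventually) auto
    next
      case MInf
      then show ?thesis using y1 by simp
    next
      case (real m)
      then have m: "1 / c < m" using y1 by simp
      have mp: "0 < m" using m cp by (smt (verit) divide_pos_pos)
      have cm: "1 / m < c" using m cp mp by (simp add: field_simps)
      define \<eta> where "\<eta> = (c - 1 / m) / 2"
      have \<eta>: "0 < \<eta>" using cm unfolding \<eta>_def by simp
      have mc: "1 < m * (c - \<eta>)"
      proof -
        have "1 / m < c - \<eta>"
        proof -
          obtain k where k: "k = 1 / m" by blast
          have "k < c" using cm k by simp
          then have "k < c - (c - k) / 2" by (simp add: field_simps)
          then show ?thesis unfolding \<eta>_def k .
        qed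
        then show ?thesis using mp by (simp add: field_simps)
      qed
      obtain \<epsilon> where eps: "0 < \<epsilon>" "\<epsilon> \<le> \<epsilon>0" and B: "\<forall>a b. \<bar>a\<bar> < \<epsilon> \<longrightarrow> \<bar>b\<bar> < \<epsilon> \<longrightarrow> a \<noteq> b \<longrightarrow>
              (c - \<eta>) * \<bar>a - b\<bar> \<le> dist (\<gamma> (s0 + a)) (\<gamma> (s0 + b))" using bnd[OF \<eta>] by blast
      obtain \<rho> where \<rho>: "0 < \<rho>" "\<forall>s\<in>pdom L cl. dist (\<gamma> s) r < \<rho> \<longrightarrow> (\<exists>a. \<bar>a\<bar> < \<epsilon> \<and> \<gamma> (s0 + a) = \<gamma> s)"
        using loc[OF eps(1)] by blast
      show ?thesis unfolding eventually_at
      proof (rule exI[of _ \<rho>], intro conjI ballI impI)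
        fix x assume x: "x \<in> D" "x \<noteq> (r, r) \<and> dist x (r, r) < \<rho>"
        obtain p q where pq: "x = (p, q)" by (cases x)
        obtain sp sq where s: "sp \<in> pdom L cl" "sq \<in> pdom L cl" "p = \<gamma> sp" "q = \<gamma> sq" "p \<noteq> q"
          using x(1) unfolding D_def pq by auto
        have "dist p r \<le> dist x (r, r)" using dist_fst_le[of x "(r, r)"] pq by simp
        then obtain a where a: "\<bar>a\<bar> < \<epsilon>" "\<gamma> (s0 + a) = p" using \<rho>(2) s x(2) by force
        have "dist q r \<le> dist x (r, r)" using dist_snd_le[of x "(r, r)"] pq by simp
        then obtain b where b: "\<bar>b\<bar> < \<epsilon>" "\<gamma> (s0 + b) = q" using \<rho>(2) s x(2) by force
        have ab: "a \<noteq> b" using a b s(5) by auto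
        have aa: "\<bar>a\<bar> < \<epsilon>0" "\<bar>b\<bar> < \<epsilon>0" using a b eps by auto
        have le: "(c - \<eta>) * \<bar>a - b\<bar> \<le> dist p q" using B a b ab by auto
        have dpos: "0 < dist p q" using s(5) by simp
        have abp: "0 < \<bar>a - b\<bar>" using ab by simp
        have "\<bar>a - b\<bar> < m * ((c - \<eta>) * \<bar>a - b\<bar>)" using mc abp
          by (simp add: mult.assoc[symmetric])
        also have "\<dots> \<le> m * dist p q" using le mp by simp
        finally have "\<bar>a - b\<bar> / dist p q < m" using dpos by (simp add: divide_less_eq mult.commute)
        moreover have "distortion \<gamma> L cl p q = \<bar>a - b\<bar> / dist p q"
          unfolding distortion_def using Lenab[OF aa] a b by simp
        ultimately show "F x < y" unfolding F_def pq real by simp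
      qed (rule \<rho>(1))
    qed
  qed
  have phi: "filterlim (\<lambda>h. (\<gamma> (s0 - h), \<gamma> (s0 + h))) (at (r, r) within D) (at_right 0)"
    unfolding filterlim_at
  proof
    show "\<forall>\<^sub>F h in at_right 0. (\<gamma> (s0 - h), \<gamma> (s0 + h)) \<in> D \<and> (\<gamma> (s0 - h), \<gamma> (s0 + h)) \<noteq> (r, r)"
      unfolding eventually_at_right_field
    proof (rule exI[of _ \<epsilon>0], intro conjI allI impI)
      fix h :: real assume h: "0 < h" "h < \<epsilon>0"
      have a1: "\<bar>- h\<bar> < \<epsilon>0" "\<bar>h\<bar> < \<epsilon>0" using h by auto
      obtain s1 where "s1 \<in> pdom L cl" "\<gamma> s1 = \<gamma> (s0 + - h)" using rep[OF a1(1)] by blast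
      then have m1: "\<gamma> (s0 - h) \<in> \<gamma> ` pdom L cl" by (metis diff_conv_add_uminus image_eqI)
      obtain s2 where "s2 \<in> pdom L cl" "\<gamma> s2 = \<gamma> (s0 + h)" using rep[OF a1(2)] by blast
      then have m2: "\<gamma> (s0 + h) \<in> \<gamma> ` pdom L cl" by (metis image_eqI)
      have ne: "\<gamma> (s0 - h) \<noteq> \<gamma> (s0 + h)"
      proof
        assume "\<gamma> (s0 - h) = \<gamma> (s0 + h)"
        then have "\<gamma> (s0 + - h) = \<gamma> (s0 + h)" by simp
        then have "- h = h" by (rule neq[OF a1])
        then show False using h by simp
      qed
      show "(\<gamma> (s0 - h), \<gamma> (s0 + h)) \<in> D" unfolding D_def using m1 m2 ne by simp
      show "(\<gamma> (s0 - h), \<gamma> (s0 + h)) \<noteq> (r, r)" using ne by auto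
    qed (use e0 in auto)
    have l1: "((\<lambda>h. \<gamma> (s0 - h)) \<longlongrightarrow> r) (at_right 0)"
    proof (rule tendstoI)
      fix e :: real assume e: "0 < e"
      show "\<forall>\<^sub>F h in at_right 0. dist (\<gamma> (s0 - h)) r < e"
        unfolding eventually_at_right_field
      proof (rule exI[of _ "min e \<epsilon>0"], intro conjI allI impI)
        fix h :: real assume h: "0 < h" "h < min e \<epsilon>0"
        have "dist (gL 0) (gL h) \<le> h - 0" using Lf.lip[of 0 h] h by auto
        then show "dist (\<gamma> (s0 - h)) r < e" using h g0 unfolding gL_def by (simp add: dist_commute)
      qed (use e e0 in auto)
    qed
    have l2: "((\<lambda>h. \<gamma> (s0 + h)) \<longlongrightarrow> r) (at_right 0)"
    proof (rule tendstoI)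
      fix e :: real assume e: "0 < e"
      show "\<forall>\<^sub>F h in at_right 0. dist (\<gamma> (s0 + h)) r < e"
        unfolding eventually_at_right_field
      proof (rule exI[of _ "min e \<epsilon>0"], intro conjI allI impI)
        fix h :: real assume h: "0 < h" "h < min e \<epsilon>0"
        have "dist (gR 0) (gR h) \<le> h - 0" using R.lip[of 0 h] h by auto
        then show "dist (\<gamma> (s0 + h)) r < e" using h g0 unfolding gR_def by (simp add: dist_commute)
      qed (use e e0 in auto)
    qed
    show "((\<lambda>h. (\<gamma> (s0 - h), \<gamma> (s0 + h))) \<longlongrightarrow> (r, r)) (at_right 0)"
      by (rule tendsto_Pair[OF l1 l2])
  qed
  have low: "esec (turn_angle \<gamma> s0 / 2) \<le> Limsup (at (r, r) within D) F"
  proof (rule ccontr)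
    assume "\<not> ?thesis"
    then have "Limsup (at (r, r) within D) F < esec (turn_angle \<gamma> s0 / 2)" by simp
    then obtain z where z: "Limsup (at (r, r) within D) F < ereal z" "ereal z < esec (turn_angle \<gamma> s0 / 2)"
      using ereal_dense2 by blast
    have "\<forall>\<^sub>F x in at (r, r) within D. F x < ereal z"
      using z(1) Limsup_le_iff[of "at (r, r) within D" F "Limsup (at (r, r) within D) F"] by auto
    then have ev1: "\<forall>\<^sub>F h in at_right 0. F (\<gamma> (s0 - h), \<gamma> (s0 + h)) < ereal z"
      using phi unfolding filterlim_iff by blast
    have ev2: "\<forall>\<^sub>F h in at_right 0. ereal z < ereal (distortion \<gamma> L cl (\<gamma> (s0 - h)) (\<gamma> (s0 + h)))"
      by (rule order_tendstoD(1)[OF lim2 z(2)])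
    have "\<forall>\<^sub>F h in at_right (0::real). False"
      using ev1 ev2 by eventually_elim (simp add: F_def)
    then show False using trivial_limit_at_right_real by (simp add: eventually_False)
  qed
  show ?thesis using up low lim2 unfolding F_def by (intro conjI antisym) auto
qed



end
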